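(* Let $C^*>0$ and $\tilde C_1=C^*+\tfrac12$. Let $\Phi,\phi\in\mathcal C_{\rm per}$ satisfy $\|\Phi\|_\infty,\|\Phi\|_2,\|\Delta_h\Phi\|_2\le C^*$, $\|\phi\|_2=1$, and $\|\phi\|_\infty,\|\Delta_h\phi\|_2\le\tilde C_1$. Set $e=\Phi-\phi$ and $$\mathcal{NLE}:=|\phi|^2e+\big(\overline{\Phi}\,e+\phi\,\overline{e}\big)\Phi$$ (pointwise products). Then there are constants $\tilde C_2,\tilde C_3>0$ depending only on $C^*$ (not on $N$, $\Phi$, $\phi$) such that $$\|\mathcal{NLE}\|_2\le\tilde C_2\|e\|_2,\qquad \|\Delta_h\mathcal{NLE}\|_2\le\tilde C_3\big(\|e\|_2+\|\Delta_he\|_2\big).$$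
   Context: Grid setting: $\Omega=(0,1)^3$, $N$ a positive integer, $h=1/N$. $\mathcal C_{\rm per}$ is the space of complex-valued grid functions on the points $(ih,jh,kh)$, $N$-periodic in each index. Discrete inner product $\langle f,g\rangle=h^3\sum_{i,j,k=1}^N\overline{f_{i,j,k}}\,g_{i,j,k}$, $\|f\|_2=\langle f,f\rangle^{1/2}$, $\|f\|_\infty=\max|f_{i,j,k}|$. $\Delta_h$ is the standard 7-point discrete Laplacian with periodic wrap-around, $(\Delta_hf)_{i,j,k}=h^{-2}(f_{i+1,j,k}+f_{i-1,j,k}+f_{i,j+1,k}+f_{i,j-1,k}+f_{i,j,k+1}+f_{i,j,k-1}-6f_{i,j,k})$; $\overline{\cdot}$ is complex conjugation. *)

theory Defs
  imports Complex_Main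
begin

type_synonym grid = "int \<Rightarrow> int \<Rightarrow> int \<Rightarrow> complex"

definition per :: "nat \<Rightarrow> grid \<Rightarrow> bool" where
  "per N f \<longleftrightarrow> (\<forall>i j k. f (i + int N) j k = f i j k \<and> f i (j + int N) k = f i j k
                          \<and> f i j (k + int N) = f i j k)"

definition gh :: "nat \<Rightarrow> real" where "gh N = 1 / real N"

definition norm2 :: "nat \<Rightarrow> grid \<Rightarrow> real" where
  "norm2 N f = sqrt (gh N ^ 3 * (\<Sum>i\<in>{1..int N}. \<Sum>j\<in>{1..int N}. \<Sum>k\<in>{1..int N}. (cmod (f i j k))\<^sup>2))"

definition normi :: "nat \<Rightarrow> grid \<Rightarrow> real" where
  "normi N f = Max {cmod (f i j k) | i j k. i \<in> {1..int N} \<and> j \<in> {1..int N} \<and> k \<in> {1..int N}}"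

definition lap :: "nat \<Rightarrow> grid \<Rightarrow> grid" where
  "lap N f = (\<lambda>i j k. complex_of_real (1 / gh N ^ 2) *
     (f (i+1) j k + f (i-1) j k + f i (j+1) k + f i (j-1) k + f i j (k+1) + f i j (k-1) - 6 * f i j k))"

definition NLE :: "grid \<Rightarrow> grid \<Rightarrow> grid" where
  "NLE \<Phi> \<phi> = (\<lambda>i j k. let e = \<Phi> i j k - \<phi> i j k in
     complex_of_real ((cmod (\<phi> i j k))\<^sup>2) * e + (cnj (\<Phi> i j k) * e + \<phi> i j k * cnj e) * \<Phi> i j k)"

end

theory Submission
  imports Defs "HOL-Analysis.Analysis"
begin


definition S3 :: "nat \<Rightarrow> (int \<Rightarrow> int \<Rightarrow> int \<Rightarrow> 'a::comm_monoid_add) \<Rightarrow> 'a" where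
  "S3 N g = (\<Sum>i\<in>{1..int N}. \<Sum>j\<in>{1..int N}. \<Sum>k\<in>{1..int N}. g i j k)"

lemma per_multiple:
  assumes "per N f"
  shows "f (i + int N * m) (j + int N * n) (k + int N * l) = f i j k"
proof -
  have A: "\<And>i j k. f (i + int N * m) j k = f i j k" for m
  proof -
    have P: "f (i + int N * int m') j k = f i j k" for m' i j k
    proof (induction m' arbitrary: i)
      case (Suc m' i)
      have "f ((i + int N) + int N * int m') j k = f (i + int N) j k" by (rule Suc.IH)
      then show ?case using assms by (simp add: per_def algebra_simps)
    qed simp
    show "\<And>i j k. f (i + int N * m) j k = f i j k"
    proof (cases "m \<ge> 0")
      case True then show "\<And>i j k. ?thesis i j k" using P[where m'="nat m"] by simp
    next
      case False
      fix i j k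
      have "f (i + int N * m + int N * int (nat (-m))) j k = f (i + int N * m) j k" by (rule P)
      then show "f (i + int N * m) j k = f i j k" using False by (simp add: algebra_simps)
    qed
  qed
  have B: "\<And>i j k. f i (j + int N * m) k = f i j k" for m
  proof -
    have P: "f i (j + int N * int m') k = f i j k" for m' i j k
    proof (induction m' arbitrary: j)
      case (Suc m' j)
      have "f i ((j + int N) + int N * int m') k = f i (j + int N) k" by (rule Suc.IH)
      then show ?case using assms by (simp add: per_def algebra_simps)
    qed simp
    show "\<And>i j k. f i (j + int N * m) k = f i j k"
    proof (cases "m \<ge> 0")
      case True then show "\<And>i j k. ?thesis i j k" using P[where m'="nat m"] by simp
    next
      case False
      fix i j k
      have "f i (j + int N * m + int N * int (nat (-m))) k = f i (j + int N * m) k" by (rule P)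
      then show "f i (j + int N * m) k = f i j k" using False by (simp add: algebra_simps)
    qed
  qed
  have C: "\<And>i j k. f i j (k + int N * m) = f i j k" for m
  proof -
    have P: "f i j (k + int N * int m') = f i j k" for m' i j k
    proof (induction m' arbitrary: k)
      case (Suc m' k)
      have "f i j ((k + int N) + int N * int m') = f i j (k + int N)" by (rule Suc.IH)
      then show ?case using assms by (simp add: per_def algebra_simps)
    qed simp
    show "\<And>i j k. f i j (k + int N * m) = f i j k"
    proof (cases "m \<ge> 0")
      case True then show "\<And>i j k. ?thesis i j k" using P[where m'="nat m"] by simp
    next
      case False
      fix i j k
      have "f i j (k + int N * m + int N * int (nat (-m))) = f i j (k + int N * m)" by (rule P)
      then show "f i j (k + int N * m) = f i j k" using False by (simp add: algebra_simps)
    qed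
  qed
  show ?thesis using A B C by simp
qed

lemma sum_shift1:
  assumes "\<And>i. h (i + int N) = h i"
  shows "(\<Sum>i\<in>{1..int N}. h (i + 1)) = (\<Sum>i\<in>{1..int N}. h i)"
proof (cases "N = 0")
  case True then show ?thesis by simp
next
  case False
  have N1: "1 \<le> int N" using False by simp
  have "(\<Sum>i\<in>{1..int N}. h (i + 1)) = (\<Sum>i\<in>{2..int N + 1}. h i)"
    by (rule sum.reindex_bij_witness[where i="\<lambda>i. i - 1" and j="\<lambda>i. i + 1"]) auto
  also have "{2..int N + 1} = insert (int N + 1) {2..int N}" using N1 by auto
  also have "(\<Sum>i\<in>insert (int N + 1) {2..int N}. h i) = h (int N + 1) + (\<Sum>i\<in>{2..int N}. h i)"
    by (simp)
  also have "h (int N + 1) = h 1" using assms[of 1] by (simp add: add.commute)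
  also have "h 1 + (\<Sum>i\<in>{2..int N}. h i) = (\<Sum>i\<in>insert 1 {2..int N}. h i)" by simp
  also have "insert 1 {2..int N} = {1..int N}"
  proof -
    have "0 < N" using False by simp
    then have "1 \<le> int N" by simp
    then show ?thesis by auto
  qed
  finally show ?thesis .
qed

lemma sum_shift:
  assumes "\<And>i. h (i + int N) = h i"
  shows "(\<Sum>i\<in>{1..int N}. h (i + c)) = (\<Sum>i\<in>{1..int N}. h i)"
proof -
  have P: "(\<Sum>i\<in>{1..int N}. g (i + int m)) = (\<Sum>i\<in>{1..int N}. g i)"
    if "\<And>i. g (i + int N) = g i" for g m
    using that
  proof (induction m arbitrary: g)
    case 0 then show ?case by simp
  next
    case (Suc m)
    have "(\<Sum>i\<in>{1..int N}. g (i + int (Suc m))) = (\<Sum>i\<in>{1..int N}. (\<lambda>x. g (x + 1)) (i + int m))"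
      by (simp add: algebra_simps)
    also have "\<dots> = (\<Sum>i\<in>{1..int N}. g (i + 1))"
      by (rule Suc.IH) (metis Suc.prems add.commute add.left_commute)
    also have "\<dots> = (\<Sum>i\<in>{1..int N}. g i)" by (rule sum_shift1) (rule Suc.prems)
    finally show ?case .
  qed
  show ?thesis
  proof (cases "c \<ge> 0")
    case True then show ?thesis using P[of h "nat c"] assms by simp
  next
    case False
    have "(\<Sum>i\<in>{1..int N}. (\<lambda>x. h (x + c)) (i + int (nat (-c)))) = (\<Sum>i\<in>{1..int N}. h (i + c))"
      by (rule P) (metis assms add.commute add.left_commute)
    then show ?thesis using False by simp
  qed
qed

lemma S3_shift:
  assumes "\<forall>i j k. g (i + int N) j k = g i j k \<and> g i (j + int N) k = g i j k \<and> g i j (k + int N) = g i j k"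
  shows "S3 N (\<lambda>i j k. g (i + a) (j + b) (k + c)) = S3 N g"
proof -
  have "S3 N (\<lambda>i j k. g (i + a) (j + b) (k + c)) =
     (\<Sum>i\<in>{1..int N}. \<Sum>j\<in>{1..int N}. \<Sum>k\<in>{1..int N}. g (i + a) (j + b) k)"
    unfolding S3_def
    by (intro sum.cong refl sum_shift) (use assms in auto)
  also have "\<dots> = (\<Sum>i\<in>{1..int N}. \<Sum>j\<in>{1..int N}. \<Sum>k\<in>{1..int N}. g (i + a) j k)"
    by (intro sum.cong refl sum_shift[where h="\<lambda>j. \<Sum>k\<in>{1..int N}. g _ j k"])
       (use assms in auto)
  also have "\<dots> = (\<Sum>i\<in>{1..int N}. \<Sum>j\<in>{1..int N}. \<Sum>k\<in>{1..int N}. g i j k)"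
    by (intro sum.cong refl sum_shift[where h="\<lambda>i. \<Sum>j\<in>{1..int N}. \<Sum>k\<in>{1..int N}. g i j k"])
       (use assms in auto)
  finally show ?thesis unfolding S3_def .
qed



definition Bx :: "nat \<Rightarrow> (int \<times> int \<times> int) set" where
  "Bx N = {1..int N} \<times> {1..int N} \<times> {1..int N}"

lemma finite_Bx[simp]: "finite (Bx N)" by (simp add: Bx_def)

lemma S3_prod: "S3 N g = (\<Sum>p\<in>Bx N. g (fst p) (fst (snd p)) (snd (snd p)))"
  unfolding S3_def Bx_def
  by (simp add: sum.cartesian_product split_def)

lemma S3_add: "S3 N (\<lambda>i j k. f i j k + g i j k) = S3 N f + S3 N g"
  unfolding S3_def by (simp add: sum.distrib)

lemma S3_diff: "S3 N (\<lambda>i j k. f i j k - g i j k) = S3 N f - (S3 N g :: 'a::ab_group_add)"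
  unfolding S3_def by (simp add: sum_subtractf)

lemma S3_cmult: "S3 N (\<lambda>i j k. c * f i j k) = c * (S3 N f :: 'a::comm_semiring_1)"
  unfolding S3_def by (simp add: sum_distrib_left)

lemma S3_multc: "S3 N (\<lambda>i j k. f i j k * c) = (S3 N f :: 'a::comm_semiring_1) * c"
  unfolding S3_def by (simp add: sum_distrib_right)

lemma S3_mono:
  assumes "\<And>i j k. i \<in> {1..int N} \<Longrightarrow> j \<in> {1..int N} \<Longrightarrow> k \<in> {1..int N} \<Longrightarrow> f i j k \<le> (g i j k::real)"
  shows "S3 N f \<le> S3 N g"
  unfolding S3_def by (intro sum_mono) (use assms in auto)

lemma S3_nonneg:
  assumes "\<And>i j k. 0 \<le> (f i j k::real)"
  shows "0 \<le> S3 N f"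
  unfolding S3_def by (intro sum_nonneg) (use assms in auto)

lemma S3_norm: "norm (S3 N f) \<le> S3 N (\<lambda>i j k. norm (f i j k :: 'a::real_normed_vector))"
  unfolding S3_def
  by (rule order_trans[OF norm_sum], intro sum_mono, rule order_trans[OF norm_sum], intro sum_mono, rule norm_sum)

lemma S3_cong:
  assumes "\<And>i j k. i \<in> {1..int N} \<Longrightarrow> j \<in> {1..int N} \<Longrightarrow> k \<in> {1..int N} \<Longrightarrow> f i j k = g i j k"
  shows "S3 N f = S3 N g"
  unfolding S3_def by (intro sum.cong refl) (use assms in auto)

lemma S3_cnj: "S3 N (\<lambda>i j k. cnj (f i j k)) = cnj (S3 N f)"
  unfolding S3_def by (simp add: cnj_sum)

lemma S3_Re: "S3 N (\<lambda>i j k. Re (f i j k)) = Re (S3 N f)"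
  unfolding S3_def by (simp add: Re_sum)

lemma S3_of_real: "S3 N (\<lambda>i j k. complex_of_real (f i j k)) = complex_of_real (S3 N f)"
  unfolding S3_def by simp

lemma S3_CS:
  "(S3 N (\<lambda>i j k. a i j k * b i j k))\<^sup>2 \<le> S3 N (\<lambda>i j k. (a i j k)\<^sup>2) * S3 N (\<lambda>i j k. (b i j k :: real)\<^sup>2)"
  unfolding S3_prod by (rule Cauchy_Schwarz_ineq_sum)

lemma S3_CS':
  assumes "\<And>i j k. 0 \<le> a i j k" "\<And>i j k. 0 \<le> b i j k"
  shows "S3 N (\<lambda>i j k. a i j k * b i j k) \<le> sqrt (S3 N (\<lambda>i j k. (a i j k)\<^sup>2)) * sqrt (S3 N (\<lambda>i j k. (b i j k :: real)\<^sup>2))"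
proof -
  have "S3 N (\<lambda>i j k. a i j k * b i j k) = sqrt ((S3 N (\<lambda>i j k. a i j k * b i j k))\<^sup>2)"
    using assms by (simp add: S3_nonneg)
  also have "\<dots> \<le> sqrt (S3 N (\<lambda>i j k. (a i j k)\<^sup>2) * S3 N (\<lambda>i j k. (b i j k :: real)\<^sup>2))"
    by (rule real_sqrt_le_mono, rule S3_CS)
  finally show ?thesis by (simp add: real_sqrt_mult)
qed

definition Q :: "nat \<Rightarrow> grid \<Rightarrow> real" where
  "Q N f = S3 N (\<lambda>i j k. (cmod (f i j k))\<^sup>2)"

lemma Q_nonneg: "0 \<le> Q N f" unfolding Q_def by (rule S3_nonneg) simp

lemma norm2_Q: "norm2 N f = sqrt (Q N f / real N ^ 3)"
  unfolding norm2_def Q_def S3_def gh_def by (simp add: power_divide)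

lemma norm2_nonneg: "0 \<le> norm2 N f" unfolding norm2_Q by (simp add: Q_nonneg)

lemma norm2_L2: "norm2 N f = sqrt (1 / real N ^ 3) * L2_set (\<lambda>p. cmod (f (fst p) (fst (snd p)) (snd (snd p)))) (Bx N)"
  unfolding norm2_Q Q_def S3_prod L2_set_def by (simp add: real_sqrt_mult real_sqrt_divide)

lemma norm2_add: "norm2 N (\<lambda>i j k. f i j k + g i j k) \<le> norm2 N f + norm2 N g"
proof -
  let ?u = "\<lambda>p. cmod (f (fst p) (fst (snd p)) (snd (snd p)))"
  let ?v = "\<lambda>p. cmod (g (fst p) (fst (snd p)) (snd (snd p)))"
  have "L2_set (\<lambda>p. cmod (f (fst p) (fst (snd p)) (snd (snd p)) + g (fst p) (fst (snd p)) (snd (snd p)))) (Bx N)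
        \<le> L2_set (\<lambda>p. ?u p + ?v p) (Bx N)"
    by (rule L2_set_mono) (auto intro: norm_triangle_ineq)
  also have "\<dots> \<le> L2_set ?u (Bx N) + L2_set ?v (Bx N)" by (rule L2_set_triangle_ineq)
  finally show ?thesis unfolding norm2_L2
    by (simp add: distrib_left[symmetric] mult_left_mono)
qed

lemma norm2_le:
  assumes "\<And>i j k. i \<in> {1..int N} \<Longrightarrow> j \<in> {1..int N} \<Longrightarrow> k \<in> {1..int N} \<Longrightarrow> cmod (f i j k) \<le> c * cmod (g i j k)"
    and "0 \<le> c"
  shows "norm2 N f \<le> c * norm2 N g"
proof -
  have "Q N f \<le> c\<^sup>2 * Q N g"
    unfolding Q_def S3_cmult[symmetric]
  proof (rule S3_mono)
    fix i j k assume "i \<in> {1..int N}" "j \<in> {1..int N}" "k \<in> {1..int N}"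
    then have "cmod (f i j k) \<le> c * cmod (g i j k)" by (rule assms)
    then have "(cmod (f i j k))\<^sup>2 \<le> (c * cmod (g i j k))\<^sup>2" by (rule power_mono) simp
    then show "(cmod (f i j k))\<^sup>2 \<le> c\<^sup>2 * (cmod (g i j k))\<^sup>2" by (simp add: power_mult_distrib)
  qed
  then have "sqrt (Q N f / real N ^ 3) \<le> sqrt (c\<^sup>2 * Q N g / real N ^ 3)"
    by (intro real_sqrt_le_mono divide_right_mono) auto
  also have "c\<^sup>2 * Q N g / real N ^ 3 = c\<^sup>2 * (Q N g / real N ^ 3)" by simp
  also have "sqrt (c\<^sup>2 * (Q N g / real N ^ 3)) = c * sqrt (Q N g / real N ^ 3)" using assms(2)
    by (simp only: real_sqrt_mult) simp
  finally show ?thesis unfolding norm2_Q .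
qed

lemma norm2_cong:
  assumes "\<And>i j k. i \<in> {1..int N} \<Longrightarrow> j \<in> {1..int N} \<Longrightarrow> k \<in> {1..int N} \<Longrightarrow> f i j k = g i j k"
  shows "norm2 N f = norm2 N g"
  unfolding norm2_Q Q_def using S3_cong[of N "\<lambda>i j k. (cmod (f i j k))\<^sup>2" "\<lambda>i j k. (cmod (g i j k))\<^sup>2"] assms
  by simp

lemma norm2_cmult: "norm2 N (\<lambda>i j k. c * f i j k) = cmod c * norm2 N f"
proof (rule antisym)
  show "norm2 N (\<lambda>i j k. c * f i j k) \<le> cmod c * norm2 N f"
    by (rule norm2_le) (auto simp: norm_mult)
next
  show "cmod c * norm2 N f \<le> norm2 N (\<lambda>i j k. c * f i j k)"
  proof (cases "c = 0")
    case True then show ?thesis by (simp add: norm2_nonneg)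
  next
    case False
    have "norm2 N f \<le> (1 / cmod c) * norm2 N (\<lambda>i j k. c * f i j k)"
      by (rule norm2_le) (use False in \<open>auto simp: norm_mult\<close>)
    then show ?thesis using False by (simp add: field_simps)
  qed
qed

lemma norm2_minus: "norm2 N (\<lambda>i j k. - f i j k) = norm2 N f"
  using norm2_cmult[of N "-1" f] by simp

lemma norm2_diff: "norm2 N (\<lambda>i j k. f i j k - g i j k) \<le> norm2 N f + norm2 N g"
  using norm2_add[of N f "\<lambda>i j k. - g i j k"] norm2_minus[of N g] by simp

lemma norm2_cnj: "norm2 N (\<lambda>i j k. cnj (f i j k)) = norm2 N f"
  unfolding norm2_Q Q_def by simp

lemma norm2_shift:
  assumes "per N f"
  shows "norm2 N (\<lambda>i j k. f (i + a) (j + b) (k + c)) = norm2 N f"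
proof -
  have "\<forall>i j k. (\<lambda>i j k. (cmod (f i j k))\<^sup>2) (i + int N) j k = (\<lambda>i j k. (cmod (f i j k))\<^sup>2) i j k \<and>
     (\<lambda>i j k. (cmod (f i j k))\<^sup>2) i (j + int N) k = (\<lambda>i j k. (cmod (f i j k))\<^sup>2) i j k \<and>
     (\<lambda>i j k. (cmod (f i j k))\<^sup>2) i j (k + int N) = (\<lambda>i j k. (cmod (f i j k))\<^sup>2) i j k"
    using assms by (simp add: per_def)
  then have "S3 N (\<lambda>i j k. (cmod (f (i + a) (j + b) (k + c)))\<^sup>2) = S3 N (\<lambda>i j k. (cmod (f i j k))\<^sup>2)"
    by (rule S3_shift[where g="\<lambda>i j k. (cmod (f i j k))\<^sup>2"])
  then show ?thesis unfolding norm2_Q Q_def by simp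
qed

lemma rep_box:
  assumes "N > 0"
  obtains i' m where "i' \<in> {1..int N}" "i = i' + int N * m"
proof -
  have "i - 1 = (i - 1) mod int N + int N * ((i - 1) div int N)" by simp
  moreover have "0 \<le> (i - 1) mod int N" "(i - 1) mod int N < int N" using assms by auto
  ultimately show ?thesis using that[of "(i - 1) mod int N + 1" "(i - 1) div int N"] by auto
qed

lemma per_reduce:
  assumes "per N f" "N > 0"
  obtains i' j' k' where "i' \<in> {1..int N}" "j' \<in> {1..int N}" "k' \<in> {1..int N}" "f i j k = f i' j' k'"
proof -
  obtain i' m where i': "i' \<in> {1..int N}" "i = i' + int N * m" using rep_box assms(2) by blast
  obtain j' n where j': "j' \<in> {1..int N}" "j = j' + int N * n" using rep_box assms(2) by blast
  obtain k' l where k': "k' \<in> {1..int N}" "k = k' + int N * l" using rep_box assms(2) by blast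
  show ?thesis using that[OF i'(1) j'(1) k'(1)] per_multiple[OF assms(1), of i' m j' n k' l] i' j' k' by simp
qed

lemma normi_ge:
  assumes "i \<in> {1..int N}" "j \<in> {1..int N}" "k \<in> {1..int N}"
  shows "cmod (f i j k) \<le> normi N f"
proof -
  have eq: "{cmod (f i j k) | i j k. i \<in> {1..int N} \<and> j \<in> {1..int N} \<and> k \<in> {1..int N}}
     = (\<lambda>p. cmod (f (fst p) (fst (snd p)) (snd (snd p)))) ` Bx N"
    unfolding Bx_def by (fastforce simp: image_iff)
  show ?thesis unfolding normi_def eq
  proof (rule Max_ge)
    show "cmod (f i j k) \<in> (\<lambda>p. cmod (f (fst p) (fst (snd p)) (snd (snd p)))) ` Bx N"
      using assms by (force simp: Bx_def)
  qed simp
qed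

lemma normi_ge_per:
  assumes "per N f" "N > 0"
  shows "cmod (f i j k) \<le> normi N f"
proof -
  obtain i' j' k' where "i' \<in> {1..int N}" "j' \<in> {1..int N}" "k' \<in> {1..int N}" "f i j k = f i' j' k'"
    using per_reduce[OF assms] .
  then show ?thesis using normi_ge[of i' N j' k' f] by simp
qed

lemma norm2_bound_sup:
  assumes "\<And>i j k. cmod (f i j k) \<le> M" "N > 0"
  shows "norm2 N f \<le> M"
proof -
  have M0: "0 \<le> M" using assms(1)[of 0 0 0] norm_ge_zero order_trans by blast
  have "Q N f \<le> S3 N (\<lambda>i j k. M\<^sup>2)"
    unfolding Q_def by (rule S3_mono, rule power_mono) (use assms in auto)
  also have "S3 N (\<lambda>i j k. M\<^sup>2) = real N ^ 3 * M\<^sup>2" unfolding S3_def by (simp add: power3_eq_cube)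
  finally have "Q N f / real N ^ 3 \<le> M\<^sup>2" using assms(2) by (simp add: field_simps)
  then show ?thesis unfolding norm2_Q using M0 real_sqrt_le_mono by fastforce
qed



definition fp :: "grid \<Rightarrow> int \<times> int \<times> int \<Rightarrow> complex" where
  "fp f p = f (fst p) (fst (snd p)) (snd (snd p))"

definition dotp :: "int \<times> int \<times> int \<Rightarrow> int \<times> int \<times> int \<Rightarrow> int" where
  "dotp k p = fst k * fst p + fst (snd k) * fst (snd p) + snd (snd k) * snd (snd p)"

definition chi :: "nat \<Rightarrow> int \<times> int \<times> int \<Rightarrow> int \<times> int \<times> int \<Rightarrow> complex" where
  "chi N k p = cis (2 * pi * of_int (dotp k p) / real N)"

definition hat :: "nat \<Rightarrow> grid \<Rightarrow> int \<times> int \<times> int \<Rightarrow> complex" where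
  "hat N f k = (\<Sum>p\<in>Bx N. fp f p * cnj (chi N k p)) / of_nat N ^ 3"

lemma cns: "(complex_of_real (cmod z))\<^sup>2 = z * cnj z"
  using complex_norm_square[of z] by simp

lemma cis_int_2pi: "cis (2 * pi * of_int m) = 1"
  using cis_multiple_2pi[of "of_int m"] by simp

lemma sum_cis1:
  assumes "N > 0"
  shows "(\<Sum>t\<in>{1..int N}. cis (2 * pi * of_int (t * r) / real N)) = (if int N dvd r then of_nat N else 0)"
proof (cases "int N dvd r")
  case True
  then obtain m where m: "r = int N * m" by blast
  have "cis (2 * pi * of_int (t * r) / real N) = 1" for t
  proof -
    have "2 * pi * of_int (t * r) / real N = 2 * pi * of_int (t * m)"
      using assms by (simp add: m field_simps)
    then show ?thesis by (simp add: cis_int_2pi)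
  qed
  then show ?thesis using True by simp
next
  case False
  define w where "w t = cis (2 * pi * of_int (t * r) / real N)" for t
  define z where "z = cis (2 * pi * of_int r / real N)"
  have zw: "z * w t = w (t + 1)" for t
  proof -
    have "2 * pi * of_int r / real N + 2 * pi * of_int (t * r) / real N = 2 * pi * of_int ((t + 1) * r) / real N"
      using assms by (simp add: field_simps)
    then show ?thesis unfolding z_def w_def by (simp add: cis_mult)
  qed
  have wper: "w (t + int N) = w t" for t
  proof -
    have "2 * pi * of_int ((t + int N) * r) / real N = 2 * pi * of_int (t * r) / real N + 2 * pi * of_int r"
      using assms by (simp add: field_simps)
    then show ?thesis unfolding w_def by (simp add: cis_mult[symmetric] cis_int_2pi)
  qed
  have "z * (\<Sum>t\<in>{1..int N}. w t) = (\<Sum>t\<in>{1..int N}. w (t + 1))"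
    by (simp add: sum_distrib_left zw)
  also have "\<dots> = (\<Sum>t\<in>{1..int N}. w t)" by (rule sum_shift1) (rule wper)
  finally have "(z - 1) * (\<Sum>t\<in>{1..int N}. w t) = 0" by (simp add: algebra_simps)
  moreover have "z \<noteq> 1"
  proof
    assume "z = 1"
    then have "cos (2 * pi * of_int r / real N) = 1" unfolding z_def by (simp add: complex_eq_iff)
    then obtain n :: int where "2 * pi * of_int r / real N = of_int n * 2 * pi"
      by (auto simp: cos_one_2pi_int)
    then have "of_int r = real_of_int n * real N" using assms by (simp add: field_simps)
    then have "r = n * int N" by (metis of_int_eq_iff of_int_mult of_int_of_nat_eq)
    then show False using False by simp
  qed
  ultimately show ?thesis using False unfolding w_def by simp
qed

lemma dvd_box_iff:
  assumes "a \<in> {1..int N}" "b \<in> {1..int N}"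
  shows "int N dvd (a - b) \<longleftrightarrow> a = b"
proof
  assume d: "int N dvd (a - b)"
  show "a = b"
  proof (rule ccontr)
    assume "a \<noteq> b"
    then consider "0 < a - b" | "0 < b - a" by linarith
    then show False
    proof cases
      case 1
      moreover have "a - b < int N" using assms by auto
      ultimately show False using d zdvd_not_zless by blast
    next
      case 2
      moreover have "b - a < int N" using assms by auto
      moreover have "int N dvd (b - a)" using d by (metis dvd_minus_iff minus_diff_eq)
      ultimately show False using zdvd_not_zless by blast
    qed
  qed
qed simp

lemma S3_product:
  "S3 N (\<lambda>a b c. A a * B b * C c) = (\<Sum>a\<in>{1..int N}. A a) * (\<Sum>b\<in>{1..int N}. B b) * (\<Sum>c\<in>{1..int N}. (C c :: 'a::comm_semiring_1))"
proof -
  have "(\<Sum>a\<in>{1..int N}. A a) * (\<Sum>b\<in>{1..int N}. B b) * (\<Sum>c\<in>{1..int N}. C c) =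
    (\<Sum>a\<in>{1..int N}. \<Sum>b\<in>{1..int N}. A a * B b) * (\<Sum>c\<in>{1..int N}. C c)"
    by (simp add: sum_product)
  also have "\<dots> = S3 N (\<lambda>a b c. A a * B b * C c)"
    unfolding S3_def by (simp only: sum_distrib_right) (simp only: sum_distrib_left)
  finally show ?thesis by simp
qed

lemma chi_cnj_mult:
  "chi N k p * cnj (chi N k q) =
   cis (2 * pi * of_int (fst k * (fst p - fst q)) / real N) *
   cis (2 * pi * of_int (fst (snd k) * (fst (snd p) - fst (snd q))) / real N) *
   cis (2 * pi * of_int (snd (snd k) * (snd (snd p) - snd (snd q))) / real N)"
proof -
  have "2 * pi * of_int (dotp k p) / real N + - (2 * pi * of_int (dotp k q) / real N) =
     2 * pi * of_int (fst k * (fst p - fst q)) / real N +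
     2 * pi * of_int (fst (snd k) * (fst (snd p) - fst (snd q))) / real N +
     2 * pi * of_int (snd (snd k) * (snd (snd p) - snd (snd q))) / real N"
    unfolding dotp_def by (simp add: divide_inverse algebra_simps)
  then show ?thesis unfolding chi_def by (simp add: cis_cnj cis_mult)
qed

lemma orth3:
  assumes "N > 0" "p \<in> Bx N" "q \<in> Bx N"
  shows "(\<Sum>k\<in>Bx N. chi N k p * cnj (chi N k q)) = (if p = q then of_nat N ^ 3 else 0)"
proof -
  have "(\<Sum>k\<in>Bx N. chi N k p * cnj (chi N k q)) =
    S3 N (\<lambda>a b c. cis (2 * pi * of_int (a * (fst p - fst q)) / real N) *
                  cis (2 * pi * of_int (b * (fst (snd p) - fst (snd q))) / real N) *
                  cis (2 * pi * of_int (c * (snd (snd p) - snd (snd q))) / real N))"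
    unfolding S3_prod by (simp add: chi_cnj_mult)
  also have "\<dots> = (if int N dvd (fst p - fst q) then of_nat N else 0) *
                  (if int N dvd (fst (snd p) - fst (snd q)) then of_nat N else 0) *
                  (if int N dvd (snd (snd p) - snd (snd q)) then of_nat N else 0)"
    unfolding S3_product sum_cis1[OF assms(1)] ..
  also have "\<dots> = (if p = q then of_nat N ^ 3 else 0)"
    using assms(2,3) unfolding Bx_def
    by (cases p, cases q) (auto simp: dvd_box_iff power3_eq_cube)
  finally show ?thesis .
qed

lemma chi_sym: "chi N k p = chi N p k"
  unfolding chi_def dotp_def by (simp add: mult.commute)

lemma inversion:
  assumes "N > 0" "p \<in> Bx N"
  shows "(\<Sum>k\<in>Bx N. hat N f k * chi N k p) = fp f p"
proof -
  have "(\<Sum>k\<in>Bx N. hat N f k * chi N k p) =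
        (\<Sum>k\<in>Bx N. \<Sum>q\<in>Bx N. fp f q / of_nat N ^ 3 * (chi N k p * cnj (chi N k q)))"
    unfolding hat_def
    by (intro sum.cong refl) (simp add: sum_divide_distrib sum_distrib_left sum_distrib_right mult_ac)
  also have "\<dots> = (\<Sum>q\<in>Bx N. fp f q / of_nat N ^ 3 * (\<Sum>k\<in>Bx N. chi N k p * cnj (chi N k q)))"
    by (subst sum.swap) (simp add: sum_distrib_left)
  also have "\<dots> = (\<Sum>q\<in>Bx N. if p = q then fp f q else 0)"
    by (intro sum.cong refl) (use assms in \<open>simp add: orth3\<close>)
  also have "\<dots> = fp f p" using assms(2) by simp
  finally show ?thesis .
qed

lemma parseval:
  assumes "N > 0"
  shows "(\<Sum>k\<in>Bx N. (cmod (hat N f k))\<^sup>2) = Q N f / real N ^ 3"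
proof -
  have "complex_of_real (\<Sum>k\<in>Bx N. (cmod (hat N f k))\<^sup>2) = (\<Sum>k\<in>Bx N. hat N f k * cnj (hat N f k))"
    unfolding of_real_sum by (intro sum.cong refl) (rule complex_norm_square)
  also have "\<dots> = (\<Sum>k\<in>Bx N. \<Sum>q\<in>Bx N. cnj (fp f q) / of_nat N ^ 3 * (hat N f k * chi N k q))"
    unfolding hat_def[of N f] by (simp add: cnj_sum sum_divide_distrib sum_distrib_left algebra_simps)
  also have "\<dots> = (\<Sum>q\<in>Bx N. cnj (fp f q) / of_nat N ^ 3 * (\<Sum>k\<in>Bx N. hat N f k * chi N k q))"
    by (subst sum.swap) (simp add: sum_distrib_left)
  also have "\<dots> = (\<Sum>q\<in>Bx N. cnj (fp f q) * fp f q) / of_nat N ^ 3"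
    by (simp add: inversion assms sum_divide_distrib)
  also have "\<dots> = complex_of_real (Q N f / real N ^ 3)"
    unfolding Q_def S3_prod fp_def
    by (simp add: cns mult.commute)
  finally show ?thesis by (simp only: of_real_eq_iff)
qed



lemma chi_shift: "chi N k (i + a, j + b, l + c) = chi N k (i, j, l) * chi N k (a, b, c)"
proof -
  have "2 * pi * of_int (dotp k (i + a, j + b, l + c)) / real N =
        2 * pi * of_int (dotp k (i, j, l)) / real N + 2 * pi * of_int (dotp k (a, b, c)) / real N"
    unfolding dotp_def by (simp add: divide_inverse algebra_simps)
  then show ?thesis unfolding chi_def by (simp add: cis_mult)
qed

lemma chi_cnj_self: "cnj (chi N k p) * chi N k p = 1"
  unfolding chi_def by (simp add: cis_cnj cis_mult)

lemma chi_per: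
  assumes "N > 0"
  shows "chi N k (i + int N, j, l) = chi N k (i, j, l)"
    and "chi N k (i, j + int N, l) = chi N k (i, j, l)"
    and "chi N k (i, j, l + int N) = chi N k (i, j, l)"
proof -
  have 1: "chi N k (int N * a, int N * b, int N * c) = 1" for a b c
  proof -
    have "2 * pi * of_int (dotp k (int N * a, int N * b, int N * c)) / real N =
          2 * pi * of_int (dotp k (a, b, c))"
      using assms unfolding dotp_def by (simp add: field_simps)
    then show ?thesis unfolding chi_def by (simp add: cis_int_2pi)
  qed
  show "chi N k (i + int N, j, l) = chi N k (i, j, l)"
    using chi_shift[of N k i "int N" j 0 l 0] 1[of 1 0 0] by simp
  show "chi N k (i, j + int N, l) = chi N k (i, j, l)"
    using chi_shift[of N k i 0 j "int N" l 0] 1[of 0 1 0] by simp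
  show "chi N k (i, j, l + int N) = chi N k (i, j, l)"
    using chi_shift[of N k i 0 j 0 l "int N"] 1[of 0 0 1] by simp
qed

lemma hat_S3: "hat N f k = S3 N (\<lambda>i j l. f i j l * cnj (chi N k (i, j, l))) / of_nat N ^ 3"
  unfolding hat_def S3_prod fp_def by simp

lemma hat_shift:
  assumes "per N f" "N > 0"
  shows "hat N (\<lambda>i j l. f (i + a) (j + b) (l + c)) k = chi N k (a, b, c) * hat N f k"
proof -
  define g where "g i j l = f i j l * cnj (chi N k (i, j, l))" for i j l
  have gper: "\<forall>i j l. g (i + int N) j l = g i j l \<and> g i (j + int N) l = g i j l \<and> g i j (l + int N) = g i j l"
    using assms unfolding g_def per_def by (simp add: chi_per)
  have "S3 N (\<lambda>i j l. f (i + a) (j + b) (l + c) * cnj (chi N k (i, j, l))) =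
        S3 N (\<lambda>i j l. chi N k (a, b, c) * g (i + a) (j + b) (l + c))"
  proof (rule S3_cong)
    fix i j l
    have "cnj (chi N k (i, j, l)) = cnj (chi N k (i, j, l)) * (cnj (chi N k (a, b, c)) * chi N k (a, b, c))"
      by (simp add: chi_cnj_self)
    also have "\<dots> = cnj (chi N k (i + a, j + b, l + c)) * chi N k (a, b, c)"
      by (simp add: chi_shift)
    finally show "f (i + a) (j + b) (l + c) * cnj (chi N k (i, j, l)) = chi N k (a, b, c) * g (i + a) (j + b) (l + c)"
      unfolding g_def by simp
  qed
  also have "\<dots> = chi N k (a, b, c) * S3 N g"
    by (simp add: S3_cmult S3_shift[OF gper])
  finally show ?thesis unfolding hat_S3 g_def by simp
qed

lemma hat_add: "hat N (\<lambda>i j l. f i j l + g i j l) k = hat N f k + hat N g k"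
  unfolding hat_def fp_def by (simp add: sum.distrib algebra_simps add_divide_distrib)

lemma hat_diff: "hat N (\<lambda>i j l. f i j l - g i j l) k = hat N f k - hat N g k"
  unfolding hat_def fp_def by (simp add: sum_subtractf algebra_simps diff_divide_distrib)

lemma hat_cmult: "hat N (\<lambda>i j l. c * f i j l) k = c * hat N f k"
  unfolding hat_def fp_def by (simp add: sum_distrib_left algebra_simps)

definition Dd :: "nat \<Rightarrow> int \<Rightarrow> int \<Rightarrow> int \<Rightarrow> grid \<Rightarrow> grid" where
  "Dd N a b c f = (\<lambda>i j l. of_nat N ^ 2 * (f (i + a) (j + b) (l + c) - 2 * f i j l + f (i - a) (j - b) (l - c)))"

definition mu :: "nat \<Rightarrow> int \<Rightarrow> real" where
  "mu N t = real N ^ 2 * (2 - 2 * cos (2 * pi * of_int t / real N))"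

definition lam :: "nat \<Rightarrow> int \<times> int \<times> int \<Rightarrow> real" where
  "lam N k = mu N (fst k) + mu N (fst (snd k)) + mu N (snd (snd k))"

lemma mu_nonneg: "0 \<le> mu N t"
  unfolding mu_def using cos_le_one[of "2 * pi * of_int t / real N"] by simp

lemma cis_plus_cis_minus: "cis x + cis (- x) = complex_of_real (2 * cos x)"
  by (simp add: complex_eq_iff)

lemma hat_Dd:
  assumes "per N f" "N > 0"
  shows "hat N (Dd N a b c f) k = - complex_of_real (mu N (dotp k (a, b, c))) * hat N f k"
proof -
  have m: "hat N (\<lambda>i j l. f (i - a) (j - b) (l - c)) k = chi N k (-a, -b, -c) * hat N f k"
    using hat_shift[OF assms, of "-a" "-b" "-c" k] by simp
  have "hat N (Dd N a b c f) k = of_nat N ^ 2 * (hat N (\<lambda>i j l. f (i + a) (j + b) (l + c)) k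
           - 2 * hat N f k + hat N (\<lambda>i j l. f (i - a) (j - b) (l - c)) k)"
    unfolding Dd_def hat_cmult hat_add hat_diff by simp
  also have "\<dots> = of_nat N ^ 2 * (chi N k (a, b, c) + chi N k (-a, -b, -c) - 2) * hat N f k"
    unfolding m hat_shift[OF assms] by (simp add: algebra_simps)
  also have "chi N k (a, b, c) + chi N k (-a, -b, -c) = complex_of_real (2 * cos (2 * pi * of_int (dotp k (a, b, c)) / real N))"
  proof -
    have "dotp k (-a, -b, -c) = - dotp k (a, b, c)" unfolding dotp_def by simp
    then show ?thesis unfolding chi_def using cis_plus_cis_minus[of "2 * pi * real_of_int (dotp k (a, b, c)) / real N"]
      by simp
  qed
  finally show ?thesis unfolding mu_def by (simp add: algebra_simps)
qed

lemma lap_Dd: "lap N f = (\<lambda>i j l. Dd N 1 0 0 f i j l + Dd N 0 1 0 f i j l + Dd N 0 0 1 f i j l)"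
  unfolding lap_def Dd_def gh_def by (intro ext) (simp add: algebra_simps power_one_over)

lemma hat_lap:
  assumes "per N f" "N > 0"
  shows "hat N (lap N f) k = - complex_of_real (lam N k) * hat N f k"
  unfolding lap_Dd hat_add hat_Dd[OF assms] lam_def dotp_def by (simp add: algebra_simps)

lemma parseval_mult:
  assumes "N > 0" "\<And>k. k \<in> Bx N \<Longrightarrow> hat N g k = complex_of_real (m k) * hat N f k"
  shows "Q N g / real N ^ 3 = (\<Sum>k\<in>Bx N. (m k)\<^sup>2 * (cmod (hat N f k))\<^sup>2)"
  unfolding parseval[OF assms(1), symmetric]
  by (intro sum.cong refl) (simp add: assms(2) norm_mult power_mult_distrib)

lemma Dd_le_lap:
  assumes "per N f" "N > 0" "d \<in> {(1,0,0), (0,1,0), (0,0,1)}"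
  shows "Q N (Dd N (fst d) (fst (snd d)) (snd (snd d)) f) \<le> Q N (lap N f)"
proof -
  have "Q N (Dd N (fst d) (fst (snd d)) (snd (snd d)) f) / real N ^ 3 =
        (\<Sum>k\<in>Bx N. (- mu N (dotp k d))\<^sup>2 * (cmod (hat N f k))\<^sup>2)"
    by (rule parseval_mult[OF assms(2)]) (simp add: hat_Dd[OF assms(1,2)])
  also have "\<dots> \<le> (\<Sum>k\<in>Bx N. (- lam N k)\<^sup>2 * (cmod (hat N f k))\<^sup>2)"
  proof (rule sum_mono)
    fix k
    have "mu N (dotp k d) \<le> lam N k"
      using assms(3) mu_nonneg[of N] unfolding lam_def dotp_def
      by (auto simp: add_increasing add_increasing2)
    then have "(- mu N (dotp k d))\<^sup>2 \<le> (- lam N k)\<^sup>2"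
      using mu_nonneg[of N "dotp k d"] by (simp add: power_mono)
    then show "(- mu N (dotp k d))\<^sup>2 * (cmod (hat N f k))\<^sup>2 \<le> (- lam N k)\<^sup>2 * (cmod (hat N f k))\<^sup>2"
      by (rule mult_right_mono) simp
  qed
  also have "\<dots> = Q N (lap N f) / real N ^ 3"
    by (rule parseval_mult[OF assms(2), symmetric]) (simp add: hat_lap[OF assms(1,2)])
  finally show ?thesis using assms(2) by (simp add: divide_le_cancel)
qed



lemma cos_lower:
  fixes x :: real assumes "x \<ge> 0" shows "1 - x^2/2 \<le> cos x"
proof -
  let ?f = "\<lambda>x::real. cos x - 1 + x^2/2"
  have "?f 0 \<le> ?f x"
  proof (rule DERIV_nonneg_imp_nondecreasing[OF assms])
    fix u :: real assume u: "0 \<le> u" "u \<le> x"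
    show "\<exists>y. DERIV ?f u :> y \<and> y \<ge> 0"
      by (rule exI[of _ "- sin u + u"]) (auto intro!: derivative_eq_intros simp: sin_x_le_x u)
  qed
  then show ?thesis by simp
qed

lemma sin_lower:
  fixes x :: real assumes "x \<ge> 0" shows "x - x^3/6 \<le> sin x"
proof -
  let ?f = "\<lambda>x::real. sin x - x + x^3/6"
  have "?f 0 \<le> ?f x"
  proof (rule DERIV_nonneg_imp_nondecreasing[OF assms])
    fix u :: real assume u: "0 \<le> u" "u \<le> x"
    have "0 \<le> cos u - 1 + u^2/2" using cos_lower[OF u(1)] by linarith
    then show "\<exists>y. DERIV ?f u :> y \<and> y \<ge> 0"
      by (intro exI[of _ "cos u - 1 + u^2/2"]) (auto intro!: derivative_eq_intros)
  qed
  then show ?thesis by simp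
qed

lemma one_minus_cos:
  fixes x :: real assumes "0 \<le> x" "x \<le> pi" shows "x^2/18 \<le> 1 - cos x"
proof -
  define y where "y = x / 2"
  have y: "0 \<le> y" "y \<le> 2" using assms pi_less_4 unfolding y_def by auto
  have "y * y \<le> 2 * 2" by (rule mult_mono) (use y in auto)
  then have "y * (y * y) \<le> y * 4" by (intro mult_left_mono) (use y in auto)
  moreover have "y^3 = y * (y * y)" by (simp add: power3_eq_cube)
  ultimately have "y / 3 \<le> y - y^3/6" by linarith
  then have s: "y / 3 \<le> sin y" using sin_lower[OF y(1)] by linarith
  have "(y/3)^2 \<le> (sin y)^2" by (rule power_mono[OF s]) (use y in simp)
  moreover have "cos x = 1 - 2 * sin y ^ 2" unfolding y_def using cos_double_sin[of "x/2"] by simp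
  ultimately show ?thesis unfolding y_def by (simp add: power_divide)
qed

lemma mu_lower:
  assumes "N > 0" "t \<in> {1..int N}"
  shows "(real_of_int (min t (int N - t)))^2 \<le> mu N t"
proof -
  define d where "d = min t (int N - t)"
  have d: "0 \<le> d" "2 * d \<le> int N" using assms unfolding d_def by (auto simp: min_def)
  have c: "cos (2 * pi * of_int t / real N) = cos (2 * pi * of_int d / real N)"
  proof (cases "d = t")
    case True then show ?thesis by simp
  next
    case False
    then have "d = int N - t" unfolding d_def by auto
    then have "real_of_int d = real N - of_int t" by simp
    then have "2 * pi * of_int d / real N = 2 * pi * (real N - of_int t) / real N" by simp
    also have "\<dots> = 2 * pi - 2 * pi * of_int t / real N"
      using assms(1) by (simp add: field_simps)
    finally have "2 * pi * of_int d / real N = 2 * pi - 2 * pi * of_int t / real N" .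
    then show ?thesis by simp
  qed
  define x where "x = 2 * pi * of_int d / real N"
  have x0: "0 \<le> x" using d unfolding x_def by simp
  have "x \<le> pi"
  proof -
    have "real_of_int (2 * d) \<le> real N" using d(2) by linarith
    then have "2 * of_int d / real N \<le> 1" using assms(1) by (simp add: field_simps)
    then have "pi * (2 * of_int d / real N) \<le> pi * 1" by (rule mult_left_mono) simp
    moreover have "2 * pi * of_int d / real N = pi * (2 * of_int d / real N)"
      by (simp add: divide_inverse mult_ac)
    ultimately show ?thesis unfolding x_def by linarith
  qed
  then have "x^2/18 \<le> 1 - cos x" using one_minus_cos x0 by blast
  then have "real N ^ 2 * (x^2 / 9) \<le> mu N t"
    unfolding mu_def c x_def[symmetric] by (intro mult_left_mono) auto
  moreover have "real N ^ 2 * (x^2 / 9) = 4 * pi^2 / 9 * (real_of_int d)^2"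
    unfolding x_def using assms(1) by (simp add: field_simps power2_eq_square)
  moreover have "(real_of_int d)^2 \<le> 4 * pi^2 / 9 * (real_of_int d)^2"
  proof -
    have "3 * 3 \<le> pi * pi" using pi_gt3 mult_mono[of 3 pi 3 pi] by simp
    then have "1 \<le> 4 * pi^2 / 9" by (simp add: power2_eq_square)
    then show ?thesis using mult_right_mono[of 1 "4 * pi^2 / 9" "(real_of_int d)^2"] by simp
  qed
  ultimately show ?thesis unfolding d_def by linarith
qed

definition gg :: "nat \<Rightarrow> real" where "gg n = (1 + real n ^ 2) powr (-2/3)"

lemma gg_nonneg: "0 \<le> gg n" unfolding gg_def by simp

lemma gg_summable: "summable gg"
proof (rule summable_comparison_test'[where N=1])
  show "summable (\<lambda>n. real n powr (-4/3))" by (simp add: summable_real_powr_iff)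
next
  fix n :: nat assume "1 \<le> n"
  then have n: "0 < real n" by simp
  have "(1 + real n ^ 2) powr (-2/3) \<le> (real n ^ 2) powr (-2/3)"
    by (rule powr_mono2') (use n in auto)
  also have "(real n ^ 2) powr (-2/3) = (real n powr 2) powr (-2/3)"
    using n by simp
  also have "\<dots> = real n powr (-4/3)"
    by (simp only: powr_powr) simp
  finally show "norm (gg n) \<le> real n powr (-4/3)" unfolding gg_def by simp
qed

lemma sum_gg_inj:
  assumes "finite S" "inj_on h S"
  shows "(\<Sum>t\<in>S. gg (h t)) \<le> suminf gg"
proof -
  have "(\<Sum>t\<in>S. gg (h t)) = sum gg (h ` S)" using sum.reindex[OF assms(2), of gg] by simp
  also have "\<dots> \<le> suminf gg" by (rule sum_le_suminf[OF gg_summable]) (use assms gg_nonneg in auto)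
  finally show ?thesis .
qed

lemma sum1_bound:
  assumes "N > 0"
  shows "(\<Sum>t\<in>{1..int N}. (1 + mu N t) powr (-2/3)) \<le> 2 * suminf gg"
proof -
  have "(\<Sum>t\<in>{1..int N}. (1 + mu N t) powr (-2/3)) \<le> (\<Sum>t\<in>{1..int N}. gg (nat t) + gg (nat (int N - t)))"
  proof (rule sum_mono)
    fix t assume t: "t \<in> {1..int N}"
    define d where "d = min t (int N - t)"
    have d0: "0 \<le> d" using t unfolding d_def by auto
    have pos: "0 < 1 + (real_of_int d)^2" by (simp add: add_pos_nonneg)
    have "(1 + mu N t) powr (-2/3) \<le> (1 + (real_of_int d)^2) powr (-2/3)"
      by (rule powr_mono2'[OF _ pos]) (use mu_lower[OF assms t] d_def in auto)
    also have "\<dots> = gg (nat d)" unfolding gg_def using d0 by simp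
    also have "\<dots> \<le> gg (nat t) + gg (nat (int N - t))"
      using gg_nonneg unfolding d_def by (cases "t \<le> int N - t") (auto simp: min_def add_increasing add_increasing2)
    finally show "(1 + mu N t) powr (-2/3) \<le> gg (nat t) + gg (nat (int N - t))" .
  qed
  also have "\<dots> = (\<Sum>t\<in>{1..int N}. gg (nat t)) + (\<Sum>t\<in>{1..int N}. gg (nat (int N - t)))"
    by (simp add: sum.distrib)
  also have "\<dots> \<le> suminf gg + suminf gg"
    by (intro add_mono sum_gg_inj) (auto simp: inj_on_def)
  finally show ?thesis by simp
qed

lemma prod_ineq:
  fixes x y z :: real
  assumes "0 \<le> x" "0 \<le> y" "0 \<le> z"
  shows "1 / (1 + x + y + z)^2 \<le> (1 + x) powr (-2/3) * (1 + y) powr (-2/3) * (1 + z) powr (-2/3)"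
proof -
  define s where "s = 1 + x + y + z"
  have s: "0 < s" using assms unfolding s_def by simp
  have P: "(1 + x) * (1 + y) * (1 + z) \<le> s ^ 3"
  proof -
    have a: "1 + x \<le> s" "1 + y \<le> s" "1 + z \<le> s" unfolding s_def using assms by auto
    have "(1 + x) * (1 + y) \<le> s * s" by (rule mult_mono[OF a(1) a(2)]) (use assms s in auto)
    then have "(1 + x) * (1 + y) * (1 + z) \<le> (s * s) * s" by (rule mult_mono[OF _ a(3)]) (use assms s in auto)
    then show ?thesis by (simp add: power3_eq_cube)
  qed
  have "(s ^ 3) powr (-2/3) = (s powr 3) powr (-2/3)"
    using s by simp
  also have "\<dots> = s powr (-2)"
    by (simp only: powr_powr) simp
  also have "\<dots> = inverse (s powr 2)" by (simp only: powr_minus)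
  also have "\<dots> = 1 / s^2" using s by (simp add: divide_inverse)
  finally have "1 / s^2 = (s ^ 3) powr (-2/3)" by simp
  also have "\<dots> \<le> ((1 + x) * (1 + y) * (1 + z)) powr (-2/3)"
    by (rule powr_mono2'[OF _ _ P]) (use assms in auto)
  also have "\<dots> = (1 + x) powr (-2/3) * (1 + y) powr (-2/3) * (1 + z) powr (-2/3)"
    by (simp add: powr_mult)
  finally show ?thesis unfolding s_def .
qed

lemma sum3_bound:
  assumes "N > 0"
  shows "(\<Sum>k\<in>Bx N. 1 / (1 + lam N k)^2) \<le> (2 * suminf gg) ^ 3"
proof -
  have "(\<Sum>k\<in>Bx N. 1 / (1 + lam N k)^2) \<le>
        (\<Sum>k\<in>Bx N. (1 + mu N (fst k)) powr (-2/3) * (1 + mu N (fst (snd k))) powr (-2/3) * (1 + mu N (snd (snd k))) powr (-2/3))"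
  proof (intro sum_mono)
    fix k
    show "1 / (1 + lam N k)^2 \<le> (1 + mu N (fst k)) powr (-2/3) * (1 + mu N (fst (snd k))) powr (-2/3) * (1 + mu N (snd (snd k))) powr (-2/3)"
      using prod_ineq[OF mu_nonneg mu_nonneg mu_nonneg, of N "fst k" N "fst (snd k)" N "snd (snd k)"]
      unfolding lam_def by (simp add: add.assoc)
  qed
  also have "\<dots> = (\<Sum>t\<in>{1..int N}. (1 + mu N t) powr (-2/3)) ^ 3"
  proof -
    have "(\<Sum>k\<in>Bx N. (1 + mu N (fst k)) powr (-2/3) * (1 + mu N (fst (snd k))) powr (-2/3) * (1 + mu N (snd (snd k))) powr (-2/3))
      = S3 N (\<lambda>a b c. (1 + mu N a) powr (-2/3) * (1 + mu N b) powr (-2/3) * (1 + mu N c) powr (-2/3))"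
      by (simp add: S3_prod)
    then show ?thesis unfolding S3_product by (simp add: power3_eq_cube)
  qed
  also have "\<dots> \<le> (2 * suminf gg) ^ 3"
    by (rule power_mono[OF sum1_bound[OF assms]]) (simp add: sum_nonneg)
  finally show ?thesis .
qed



lemma lam_nonneg: "0 \<le> lam N k"
  unfolding lam_def using mu_nonneg[of N] by (simp add: add_nonneg_nonneg)

lemma norm2_sq: "(norm2 N f)^2 = Q N f / real N ^ 3"
  unfolding norm2_Q using Q_nonneg[of N f] by simp

lemma sum_CS':
  fixes a b :: "'a \<Rightarrow> real"
  shows "(\<Sum>i\<in>I. a i * b i) \<le> sqrt (\<Sum>i\<in>I. (a i)\<^sup>2) * sqrt (\<Sum>i\<in>I. (b i)\<^sup>2)"
proof -
  have "(\<Sum>i\<in>I. a i * b i) \<le> sqrt ((\<Sum>i\<in>I. a i * b i)\<^sup>2)" by simp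
  also have "\<dots> \<le> sqrt ((\<Sum>i\<in>I. (a i)\<^sup>2) * (\<Sum>i\<in>I. (b i)\<^sup>2))"
    by (rule real_sqrt_le_mono, rule Cauchy_Schwarz_ineq_sum)
  finally show ?thesis by (simp add: real_sqrt_mult)
qed

lemma sup_bound_box:
  assumes N: "N > 0" "per N f" "p \<in> Bx N"
  shows "cmod (fp f p) \<le> sqrt 2 * sqrt ((2 * suminf gg) ^ 3) * (norm2 N f + norm2 N (lap N f))"
proof -
  define T where "T = (2 * suminf gg) ^ 3"
  have lp: "0 < 1 + lam N k" for k using lam_nonneg[of N k] by simp
  have "cmod (fp f p) = cmod (\<Sum>k\<in>Bx N. hat N f k * chi N k p)" using inversion[OF N(1,3)] by simp
  also have "\<dots> \<le> (\<Sum>k\<in>Bx N. cmod (hat N f k))"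
    by (rule order_trans[OF norm_sum]) (simp add: norm_mult chi_def)
  also have "\<dots> = (\<Sum>k\<in>Bx N. ((1 + lam N k) * cmod (hat N f k)) * (1 / (1 + lam N k)))"
  proof (intro sum.cong refl)
    fix k
    have "1 + lam N k \<noteq> 0" using lp[of k] by simp
    then show "cmod (hat N f k) = ((1 + lam N k) * cmod (hat N f k)) * (1 / (1 + lam N k))" by simp
  qed
  also have "\<dots> \<le> sqrt (\<Sum>k\<in>Bx N. ((1 + lam N k) * cmod (hat N f k))\<^sup>2) * sqrt (\<Sum>k\<in>Bx N. (1 / (1 + lam N k))\<^sup>2)"
    by (rule sum_CS')
  also have "\<dots> \<le> sqrt (2 * (norm2 N f + norm2 N (lap N f))\<^sup>2) * sqrt T"
  proof (rule mult_mono)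
    have "(\<Sum>k\<in>Bx N. ((1 + lam N k) * cmod (hat N f k))\<^sup>2) \<le>
          (\<Sum>k\<in>Bx N. 2 * (cmod (hat N f k))\<^sup>2 + 2 * ((- lam N k)\<^sup>2 * (cmod (hat N f k))\<^sup>2))"
    proof (rule sum_mono)
      fix k
      have "(1 + lam N k)\<^sup>2 \<le> 2 + 2 * (lam N k)\<^sup>2"
        using sum_squares_ge_zero[of "1 - lam N k" 0] by (simp add: power2_eq_square algebra_simps)
      then have "(1 + lam N k)\<^sup>2 * (cmod (hat N f k))\<^sup>2 \<le> (2 + 2 * (lam N k)\<^sup>2) * (cmod (hat N f k))\<^sup>2"
        by (rule mult_right_mono) simp
      moreover have "((1 + lam N k) * cmod (hat N f k))\<^sup>2 = (1 + lam N k)\<^sup>2 * (cmod (hat N f k))\<^sup>2"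
        by (simp only: power_mult_distrib)
      moreover have "2 * (cmod (hat N f k))\<^sup>2 + 2 * ((- lam N k)\<^sup>2 * (cmod (hat N f k))\<^sup>2) = (2 + 2 * (lam N k)\<^sup>2) * (cmod (hat N f k))\<^sup>2"
        by (simp add: algebra_simps)
      ultimately show "((1 + lam N k) * cmod (hat N f k))\<^sup>2 \<le> 2 * (cmod (hat N f k))\<^sup>2 + 2 * ((- lam N k)\<^sup>2 * (cmod (hat N f k))\<^sup>2)"
        by linarith
    qed
    also have "\<dots> = 2 * (Q N f / real N ^ 3) + 2 * (Q N (lap N f) / real N ^ 3)"
    proof -
      have PL: "Q N (lap N f) / real N ^ 3 = (\<Sum>k\<in>Bx N. (- lam N k)\<^sup>2 * (cmod (hat N f k))\<^sup>2)"
        by (rule parseval_mult[OF N(1)]) (simp add: hat_lap[OF N(2,1)])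
      show ?thesis unfolding PL parseval[OF N(1), of f, symmetric]
        by (simp add: sum.distrib sum_distrib_left)
    qed
    also have "\<dots> = 2 * ((norm2 N f)\<^sup>2 + (norm2 N (lap N f))\<^sup>2)" by (simp add: norm2_sq)
    also have "\<dots> \<le> 2 * (norm2 N f + norm2 N (lap N f))\<^sup>2"
      using norm2_nonneg[of N f] norm2_nonneg[of N "lap N f"] by (simp add: power2_eq_square algebra_simps)
    finally show "sqrt (\<Sum>k\<in>Bx N. ((1 + lam N k) * cmod (hat N f k))\<^sup>2) \<le> sqrt (2 * (norm2 N f + norm2 N (lap N f))\<^sup>2)"
      by (rule real_sqrt_le_mono)
    have "(\<Sum>k\<in>Bx N. (1 / (1 + lam N k))\<^sup>2) \<le> T"
      unfolding T_def using sum3_bound[OF N(1)] by (simp add: power_divide)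
    then show "sqrt (\<Sum>k\<in>Bx N. (1 / (1 + lam N k))\<^sup>2) \<le> sqrt T" by (rule real_sqrt_le_mono)
  qed (simp_all add: sum_nonneg)
  also have "\<dots> = sqrt 2 * sqrt T * (norm2 N f + norm2 N (lap N f))"
    using norm2_nonneg[of N f] norm2_nonneg[of N "lap N f"] by (simp add: real_sqrt_mult)
  finally show ?thesis unfolding T_def .
qed

lemma sup_bound:
  "\<exists>K>0. \<forall>N f i j l. N > 0 \<longrightarrow> per N f \<longrightarrow> cmod (f i j l) \<le> K * (norm2 N f + norm2 N (lap N f))"
proof -
  define K where "K = sqrt 2 * sqrt ((2 * suminf gg) ^ 3) + 1"
  have T0: "0 \<le> suminf gg" by (rule suminf_nonneg[OF gg_summable gg_nonneg])
  have "0 \<le> sqrt 2 * sqrt ((2 * suminf gg) ^ 3)" using T0 by simp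
  then have K0: "K > 0" unfolding K_def by linarith
  have "cmod (f i j l) \<le> K * (norm2 N f + norm2 N (lap N f))" if NN: "N > 0" "per N f" for N f i j l
  proof -
    obtain i' j' l' where b: "i' \<in> {1..int N}" "j' \<in> {1..int N}" "l' \<in> {1..int N}" "f i j l = f i' j' l'"
      using per_reduce[OF NN(2,1)] .
    then have bx: "(i', j', l') \<in> Bx N" by (simp add: Bx_def)
    have "cmod (f i j l) \<le> sqrt 2 * sqrt ((2 * suminf gg) ^ 3) * (norm2 N f + norm2 N (lap N f))"
      using sup_bound_box[OF NN bx] b(4) by (simp add: fp_def)
    also have "\<dots> \<le> K * (norm2 N f + norm2 N (lap N f))"
      unfolding K_def using norm2_nonneg[of N f] norm2_nonneg[of N "lap N f"]
      by (intro mult_right_mono) auto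
    finally show ?thesis .
  qed
  then show ?thesis using K0 by blast
qed



definition pg :: "nat \<Rightarrow> (int \<Rightarrow> int \<Rightarrow> int \<Rightarrow> 'a) \<Rightarrow> bool" where
  "pg N g \<longleftrightarrow> (\<forall>i j k. g (i + int N) j k = g i j k \<and> g i (j + int N) k = g i j k \<and> g i j (k + int N) = g i j k)"

lemma per_pg: "per N f = pg N f" by (simp add: per_def pg_def)

lemma pg_shift:
  assumes "pg N g"
  shows "pg N (\<lambda>i j k. g (i + a) (j + b) (k + c))"
  unfolding pg_def
proof (intro allI conjI)
  fix i j k
  have A: "g (x + int N) y z = g x y z" "g x (y + int N) z = g x y z" "g x y (z + int N) = g x y z" for x y z
    using assms unfolding pg_def by auto
  show "g (i + int N + a) (j + b) (k + c) = g (i + a) (j + b) (k + c)"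
    using A(1)[of "i + a" "j + b" "k + c"] by (simp add: ac_simps)
  show "g (i + a) (j + int N + b) (k + c) = g (i + a) (j + b) (k + c)"
    using A(2)[of "i + a" "j + b" "k + c"] by (simp add: ac_simps)
  show "g (i + a) (j + b) (k + int N + c) = g (i + a) (j + b) (k + c)"
    using A(3)[of "i + a" "j + b" "k + c"] by (simp add: ac_simps)
qed

lemma pg_comb1: "pg N g \<Longrightarrow> pg N (\<lambda>i j k. F (g i j k))"
  by (simp add: pg_def)

lemma pg_comb2: "pg N g \<Longrightarrow> pg N h \<Longrightarrow> pg N (\<lambda>i j k. F (g i j k) (h i j k))"
  by (simp add: pg_def)

lemma S3_shift': "pg N g \<Longrightarrow> S3 N (\<lambda>i j k. g (i + a) (j + b) (k + c)) = S3 N g"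
  by (rule S3_shift) (simp add: pg_def)

definition Dp :: "nat \<Rightarrow> int \<Rightarrow> int \<Rightarrow> int \<Rightarrow> grid \<Rightarrow> grid" where
  "Dp N a b c f = (\<lambda>i j l. of_nat N * (f (i + a) (j + b) (l + c) - f i j l))"

lemma pg_Dp:
  assumes "pg N f" shows "pg N (Dp N a b c f)"
proof -
  have s: "pg N (\<lambda>i j k. f (i + a) (j + b) (k + c))" by (rule pg_shift) fact
  show ?thesis using pg_comb2[OF s assms, of "\<lambda>x y. of_nat N * (x - y)"] unfolding Dp_def by simp
qed

lemma cubic_diff:
  "cmod (z * of_real ((cmod z)\<^sup>2) - u * of_real ((cmod u)\<^sup>2)) \<le> cmod (z - u) * (3/2 * ((cmod z)\<^sup>2 + (cmod u)\<^sup>2))"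
proof -
  define a where "a = cmod z"
  define b where "b = cmod u"
  define d where "d = cmod (z - u)"
  have ab: "0 \<le> a" "0 \<le> b" "0 \<le> d" unfolding a_def b_def d_def by auto
  have e: "z * of_real ((cmod z)\<^sup>2) - u * of_real ((cmod u)\<^sup>2) = (z - u) * of_real (a\<^sup>2) + u * of_real (a\<^sup>2 - b\<^sup>2)"
    unfolding a_def b_def by (simp add: algebra_simps)
  have "cmod (z * of_real ((cmod z)\<^sup>2) - u * of_real ((cmod u)\<^sup>2)) \<le> d * a\<^sup>2 + b * \<bar>a\<^sup>2 - b\<^sup>2\<bar>"
  proof -
    have "cmod ((z - u) * of_real (a\<^sup>2)) = d * a\<^sup>2"
      by (simp only: norm_mult norm_of_real d_def) simp
    moreover have "cmod (u * of_real (a\<^sup>2 - b\<^sup>2)) = b * \<bar>a\<^sup>2 - b\<^sup>2\<bar>"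
      by (simp only: norm_mult norm_of_real b_def)
    ultimately show ?thesis
      unfolding e using norm_triangle_ineq[of "(z - u) * of_real (a\<^sup>2)" "u * of_real (a\<^sup>2 - b\<^sup>2)"]
      by linarith
  qed
  moreover have "\<bar>a\<^sup>2 - b\<^sup>2\<bar> \<le> d * (a + b)"
  proof -
    have "\<bar>a - b\<bar> \<le> d" unfolding a_def b_def d_def by (rule norm_triangle_ineq3)
    moreover have "\<bar>a\<^sup>2 - b\<^sup>2\<bar> = \<bar>a - b\<bar> * (a + b)"
    proof -
      have "a\<^sup>2 - b\<^sup>2 = (a - b) * (a + b)" by (simp add: power2_eq_square algebra_simps)
      then show ?thesis using ab by (simp add: abs_mult)
    qed
    ultimately show ?thesis using ab by (simp add: mult_right_mono)
  qed
  then have "b * \<bar>a\<^sup>2 - b\<^sup>2\<bar> \<le> b * (d * (a + b))" using ab by (simp add: mult_left_mono)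
  moreover have "d * a\<^sup>2 + b * (d * (a + b)) \<le> d * (3/2 * (a\<^sup>2 + b\<^sup>2))"
  proof -
    have "a * b \<le> (a\<^sup>2 + b\<^sup>2) / 2" using sum_squares_ge_zero[of "a - b" 0] by (simp add: power2_eq_square algebra_simps)
    then have "a\<^sup>2 + b * (a + b) \<le> 3/2 * (a\<^sup>2 + b\<^sup>2)" by (simp add: algebra_simps power2_eq_square)
    then have "d * (a\<^sup>2 + b * (a + b)) \<le> d * (3/2 * (a\<^sup>2 + b\<^sup>2))" using ab(3) by (rule mult_left_mono)
    then show ?thesis by (simp add: algebra_simps)
  qed
  ultimately show ?thesis unfolding a_def b_def d_def by linarith
qed



lemma cnj_w: "cnj z * (z * complex_of_real ((cmod z)\<^sup>2)) = complex_of_real ((cmod z)^4)"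
proof -
  have e: "z * cnj z = complex_of_real ((cmod z)\<^sup>2)" by (rule complex_norm_square[symmetric])
  have "cnj z * (z * complex_of_real ((cmod z)\<^sup>2)) = (z * cnj z) * complex_of_real ((cmod z)\<^sup>2)"
    by (simp only: ac_simps)
  also have "\<dots> = complex_of_real ((cmod z)\<^sup>2 * (cmod z)\<^sup>2)" by (simp only: e of_real_mult)
  also have "(cmod z)\<^sup>2 * (cmod z)\<^sup>2 = (cmod z)^4" by (simp add: power2_eq_square power4_eq_xxxx)
  finally show ?thesis .
qed

lemma L4:
  assumes per: "per N f" and M: "\<And>i j l. cmod (f i j l) \<le> M"
  shows "S3 N (\<lambda>i j l. (cmod (Dp N a b c f i j l))^4) \<le>
         3 * M * sqrt (Q N (Dd N a b c f)) * sqrt (S3 N (\<lambda>i j l. (cmod (Dp N a b c f i j l))^4))"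
proof -
  define A where "A = Dp N a b c f"
  define w where "w = (\<lambda>i j l. A i j l * of_real ((cmod (A i j l))\<^sup>2))"
  define S4 where "S4 = S3 N (\<lambda>i j l. (cmod (A i j l))^4)"
  define DD where "DD = Dd N a b c f"
  have M0: "0 \<le> M" using M[of 0 0 0] norm_ge_zero order_trans by blast
  have pf: "pg N f" using per by (simp add: per_pg)
  have pA: "pg N A" unfolding A_def by (rule pg_Dp[OF pf])
  have pw: "pg N w" unfolding w_def using pg_comb1[OF pA, of "\<lambda>x. x * of_real ((cmod x)\<^sup>2)"] by simp
  have S40: "0 \<le> S4" unfolding S4_def by (rule S3_nonneg) simp
  have S4c: "complex_of_real S4 = S3 N (\<lambda>i j l. cnj (A i j l) * w i j l)"
    unfolding S4_def w_def S3_of_real[symmetric] by (rule S3_cong) (simp only: cnj_w)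
  define G where "G = (\<lambda>i j l. cnj (f i j l) * w (i - a) (j - b) (l - c))"
  have pG: "pg N G"
  proof -
    have "pg N (\<lambda>i j k. w (i + - a) (j + - b) (k + - c))" by (rule pg_shift[OF pw])
    then have "pg N (\<lambda>i j k. w (i - a) (j - b) (k - c))" by simp
    from pg_comb2[OF pf this, of "\<lambda>x y. cnj x * y"] show ?thesis unfolding G_def by simp
  qed
  have shG: "S3 N (\<lambda>i j l. cnj (f (i + a) (j + b) (l + c)) * w i j l) = S3 N G"
    using S3_shift'[OF pG, of a b c] unfolding G_def by simp
  have "S3 N (\<lambda>i j l. cnj (A i j l) * w i j l) =
        S3 N (\<lambda>i j l. of_nat N * (cnj (f (i + a) (j + b) (l + c)) * w i j l) - of_nat N * (cnj (f i j l) * w i j l))"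
    by (rule S3_cong) (simp add: A_def Dp_def algebra_simps)
  also have "\<dots> = of_nat N * S3 N G - of_nat N * S3 N (\<lambda>i j l. cnj (f i j l) * w i j l)"
    by (simp only: S3_diff S3_cmult shG)
  also have "\<dots> = S3 N (\<lambda>i j l. cnj (f i j l) * (of_nat N * (w (i - a) (j - b) (l - c) - w i j l)))"
    unfolding G_def S3_cmult[symmetric] S3_diff[symmetric] by (rule S3_cong) (simp add: algebra_simps)
  finally have eq: "complex_of_real S4 = S3 N (\<lambda>i j l. cnj (f i j l) * (of_nat N * (w (i - a) (j - b) (l - c) - w i j l)))"
    using S4c by simp
  have "S4 = cmod (complex_of_real S4)" using S40 by simp
  also have "\<dots> \<le> S3 N (\<lambda>i j l. cmod (cnj (f i j l) * (of_nat N * (w (i - a) (j - b) (l - c) - w i j l))))"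
    unfolding eq by (rule S3_norm)
  also have "\<dots> \<le> S3 N (\<lambda>i j l. M * (cmod (DD i j l) * (3/2 * ((cmod (A i j l))\<^sup>2 + (cmod (A (i - a) (j - b) (l - c)))\<^sup>2))))"
  proof (rule S3_mono)
    fix i j l
    have dd: "of_nat N * (A i j l - A (i - a) (j - b) (l - c)) = DD i j l"
      by (simp add: A_def Dp_def DD_def Dd_def algebra_simps power2_eq_square)
    have "cmod (of_nat N * (w (i - a) (j - b) (l - c) - w i j l)) = real N * cmod (w i j l - w (i - a) (j - b) (l - c))"
      by (simp add: norm_mult norm_minus_commute)
    also have "\<dots> \<le> real N * (cmod (A i j l - A (i - a) (j - b) (l - c)) * (3/2 * ((cmod (A i j l))\<^sup>2 + (cmod (A (i - a) (j - b) (l - c)))\<^sup>2)))"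
      unfolding w_def by (rule mult_left_mono[OF cubic_diff]) simp
    also have "\<dots> = cmod (DD i j l) * (3/2 * ((cmod (A i j l))\<^sup>2 + (cmod (A (i - a) (j - b) (l - c)))\<^sup>2))"
      unfolding dd[symmetric] by (simp add: norm_mult)
    finally have X: "cmod (of_nat N * (w (i - a) (j - b) (l - c) - w i j l)) \<le> cmod (DD i j l) * (3/2 * ((cmod (A i j l))\<^sup>2 + (cmod (A (i - a) (j - b) (l - c)))\<^sup>2))" .
    have "cmod (cnj (f i j l) * (of_nat N * (w (i - a) (j - b) (l - c) - w i j l))) =
          cmod (f i j l) * cmod (of_nat N * (w (i - a) (j - b) (l - c) - w i j l))"
      by (simp only: norm_mult complex_mod_cnj)
    also have "\<dots> \<le> M * (cmod (DD i j l) * (3/2 * ((cmod (A i j l))\<^sup>2 + (cmod (A (i - a) (j - b) (l - c)))\<^sup>2)))"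
      by (rule mult_mono[OF M X M0 norm_ge_zero])
    finally show "cmod (cnj (f i j l) * (of_nat N * (w (i - a) (j - b) (l - c) - w i j l))) \<le> M * (cmod (DD i j l) * (3/2 * ((cmod (A i j l))\<^sup>2 + (cmod (A (i - a) (j - b) (l - c)))\<^sup>2)))" .
  qed
  also have "\<dots> = M * (3/2) * (S3 N (\<lambda>i j l. cmod (DD i j l) * (cmod (A i j l))\<^sup>2) +
                            S3 N (\<lambda>i j l. cmod (DD i j l) * (cmod (A (i - a) (j - b) (l - c)))\<^sup>2))"
    unfolding S3_add[symmetric] S3_cmult[symmetric] by (rule S3_cong) (simp add: algebra_simps)
  also have "\<dots> \<le> M * (3/2) * (sqrt (Q N DD) * sqrt S4 + sqrt (Q N DD) * sqrt S4)"
  proof (rule mult_left_mono[OF add_mono])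
    have "S3 N (\<lambda>i j l. cmod (DD i j l) * (cmod (A i j l))\<^sup>2) \<le>
          sqrt (S3 N (\<lambda>i j l. (cmod (DD i j l))\<^sup>2)) * sqrt (S3 N (\<lambda>i j l. ((cmod (A i j l))\<^sup>2)\<^sup>2))"
      by (rule S3_CS') auto
    then show "S3 N (\<lambda>i j l. cmod (DD i j l) * (cmod (A i j l))\<^sup>2) \<le> sqrt (Q N DD) * sqrt S4"
      unfolding Q_def S4_def by (simp add: power2_eq_square power4_eq_xxxx mult.assoc)
    have p4: "pg N (\<lambda>i j l. (cmod (A i j l))^4)" using pg_comb1[OF pA, of "\<lambda>x. (cmod x)^4"] by simp
    have "S3 N (\<lambda>i j l. (cmod (A (i + - a) (j + - b) (l + - c)))^4) = S4"
      unfolding S4_def by (rule S3_shift'[OF p4])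
    then have sh4: "S3 N (\<lambda>i j l. (cmod (A (i - a) (j - b) (l - c)))^4) = S4" by simp
    have "S3 N (\<lambda>i j l. cmod (DD i j l) * (cmod (A (i - a) (j - b) (l - c)))\<^sup>2) \<le>
          sqrt (S3 N (\<lambda>i j l. (cmod (DD i j l))\<^sup>2)) * sqrt (S3 N (\<lambda>i j l. ((cmod (A (i - a) (j - b) (l - c)))\<^sup>2)\<^sup>2))"
      by (rule S3_CS') auto
    then show "S3 N (\<lambda>i j l. cmod (DD i j l) * (cmod (A (i - a) (j - b) (l - c)))\<^sup>2) \<le> sqrt (Q N DD) * sqrt S4"
      unfolding Q_def sh4[symmetric] by (simp add: power2_eq_square power4_eq_xxxx mult.assoc)
  qed (use M0 in simp)
  also have "\<dots> = 3 * M * sqrt (Q N DD) * sqrt S4" by (simp add: algebra_simps)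
  finally show ?thesis unfolding S4_def A_def DD_def .
qed

lemma L4':
  assumes per: "per N f" and M: "\<And>i j l. cmod (f i j l) \<le> M"
  shows "sqrt (S3 N (\<lambda>i j l. (cmod (Dp N a b c f i j l))^4)) \<le> 3 * M * sqrt (Q N (Dd N a b c f))"
proof -
  define S where "S = S3 N (\<lambda>i j l. (cmod (Dp N a b c f i j l))^4)"
  have M0: "0 \<le> M" using M[of 0 0 0] norm_ge_zero order_trans by blast
  have S0: "0 \<le> S" unfolding S_def by (rule S3_nonneg) simp
  have "S \<le> 3 * M * sqrt (Q N (Dd N a b c f)) * sqrt S" unfolding S_def by (rule L4[OF assms])
  show ?thesis
  proof (cases "S = 0")
    case True then show ?thesis using M0 Q_nonneg[of N "Dd N a b c f"] by (simp add: S_def[symmetric])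
  next
    case False
    then have sp: "0 < sqrt S" using S0 by simp
    have "sqrt S * sqrt S \<le> 3 * M * sqrt (Q N (Dd N a b c f)) * sqrt S"
      using \<open>S \<le> _\<close> S0 by simp
    from mult_right_le_imp_le[OF this sp] show ?thesis unfolding S_def .
  qed
qed



lemma per_of_pg: "pg N f \<Longrightarrow> per N f" by (simp add: per_pg)

lemma cross_bound:
  assumes N: "N > 0" and pA: "per N A" and pe: "per N e"
    and MA: "\<And>i j l. cmod (A i j l) \<le> M" and Ee: "\<And>i j l. cmod (e i j l) \<le> E"
    and LA: "norm2 N (lap N A) \<le> L"
    and dA: "Q N (Dd N a b c A) \<le> Q N (lap N A)" and de: "Q N (Dd N a b c e) \<le> Q N (lap N e)"
  shows "norm2 N (\<lambda>i j l. Dp N a b c A i j l * Dp N a b c e i j l) \<le> 3 * sqrt (M * L) * ((E + norm2 N (lap N e)) / 2)"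
proof -
  have M0: "0 \<le> M" using MA[of 0 0 0] norm_ge_zero order_trans by blast
  have E0: "0 \<le> E" using Ee[of 0 0 0] norm_ge_zero order_trans by blast
  have L0: "0 \<le> L" using LA norm2_nonneg order_trans by blast
  define l where "l = norm2 N (lap N e)"
  have l0: "0 \<le> l" unfolding l_def by (rule norm2_nonneg)
  have "Q N (\<lambda>i j l. Dp N a b c A i j l * Dp N a b c e i j l) =
        S3 N (\<lambda>i j l. (cmod (Dp N a b c A i j l))\<^sup>2 * (cmod (Dp N a b c e i j l))\<^sup>2)"
    unfolding Q_def by (simp add: norm_mult power_mult_distrib)
  also have "\<dots> \<le> sqrt (S3 N (\<lambda>i j l. ((cmod (Dp N a b c A i j l))\<^sup>2)\<^sup>2)) * sqrt (S3 N (\<lambda>i j l. ((cmod (Dp N a b c e i j l))\<^sup>2)\<^sup>2))"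
    by (rule S3_CS') auto
  also have "\<dots> = sqrt (S3 N (\<lambda>i j l. (cmod (Dp N a b c A i j l))^4)) * sqrt (S3 N (\<lambda>i j l. (cmod (Dp N a b c e i j l))^4))"
    by (simp add: power2_eq_square power4_eq_xxxx mult.assoc)
  also have "\<dots> \<le> (3 * M * sqrt (Q N (Dd N a b c A))) * (3 * E * sqrt (Q N (Dd N a b c e)))"
    by (rule mult_mono[OF L4'[OF pA MA] L4'[OF pe Ee]]) (use M0 Q_nonneg in \<open>auto intro: S3_nonneg\<close>)
  also have "\<dots> \<le> (3 * M * sqrt (Q N (lap N A))) * (3 * E * sqrt (Q N (lap N e)))"
    by (intro mult_mono mult_left_mono real_sqrt_le_mono dA de) (use M0 E0 Q_nonneg in auto)
  finally have q: "Q N (\<lambda>i j l. Dp N a b c A i j l * Dp N a b c e i j l) / real N ^ 3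
       \<le> 9 * M * E * (sqrt (Q N (lap N A) / real N ^ 3) * sqrt (Q N (lap N e) / real N ^ 3))"
    using N by (simp add: divide_right_mono real_sqrt_divide field_simps)
  have "sqrt (Q N (lap N A) / real N ^ 3) * sqrt (Q N (lap N e) / real N ^ 3) \<le> L * l"
    unfolding l_def norm2_Q[symmetric] by (rule mult_right_mono[OF LA norm2_nonneg])
  then have "Q N (\<lambda>i j l. Dp N a b c A i j l * Dp N a b c e i j l) / real N ^ 3 \<le> 9 * M * E * (L * l)"
    using q M0 E0 by (smt (verit) mult_left_mono mult_nonneg_nonneg)
  then have "norm2 N (\<lambda>i j l. Dp N a b c A i j l * Dp N a b c e i j l) \<le> sqrt (9 * (M * L) * (E * l))"
    unfolding norm2_Q by (rule real_sqrt_le_mono[THEN order_trans]) (simp add: algebra_simps)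
  also have "\<dots> = 3 * sqrt (M * L) * sqrt (E * l)" by (simp add: real_sqrt_mult)
  also have "\<dots> \<le> 3 * sqrt (M * L) * ((E + l) / 2)"
    by (rule mult_left_mono[OF arith_geo_mean_sqrt[OF E0 l0]]) (use M0 L0 in simp)
  finally show ?thesis unfolding l_def .
qed

lemma lap_product:
  "lap N (\<lambda>i j l. A i j l * e i j l) = (\<lambda>i j l.
     A i j l * lap N e i j l + e i j l * lap N A i j l
     + (Dp N 1 0 0 A i j l * Dp N 1 0 0 e i j l + Dp N 1 0 0 A (i - 1) j l * Dp N 1 0 0 e (i - 1) j l)
     + (Dp N 0 1 0 A i j l * Dp N 0 1 0 e i j l + Dp N 0 1 0 A i (j - 1) l * Dp N 0 1 0 e i (j - 1) l)
     + (Dp N 0 0 1 A i j l * Dp N 0 0 1 e i j l + Dp N 0 0 1 A i j (l - 1) * Dp N 0 0 1 e i j (l - 1)))"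
  unfolding lap_Dd Dd_def Dp_def by (intro ext) (simp add: algebra_simps power2_eq_square)

lemma norm2_pair:
  assumes "per N P"
  shows "norm2 N (\<lambda>i j l. P i j l + P (i - a) (j - b) (l - c)) \<le> 2 * norm2 N P"
proof -
  have "norm2 N (\<lambda>i j l. P i j l + P (i - a) (j - b) (l - c)) \<le> norm2 N P + norm2 N (\<lambda>i j l. P (i - a) (j - b) (l - c))"
    by (rule norm2_add)
  also have "norm2 N (\<lambda>i j l. P (i - a) (j - b) (l - c)) = norm2 N P"
    using norm2_shift[OF assms, of "-a" "-b" "-c"] by simp
  finally show ?thesis by simp
qed

lemma per_prodDp:
  assumes "per N A" "per N e"
  shows "per N (\<lambda>i j l. Dp N a b c A i j l * Dp N a b c e i j l)"
proof -
  have "pg N (Dp N a b c A)" "pg N (Dp N a b c e)" using assms by (simp_all add: per_pg pg_Dp)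
  from pg_comb2[OF this, of "\<lambda>x y. x * y"] show ?thesis by (simp add: per_pg)
qed

lemma prod_lap:
  assumes N: "N > 0" and pA: "per N A" and pe: "per N e"
    and MA: "\<And>i j l. cmod (A i j l) \<le> M" and LA: "norm2 N (lap N A) \<le> L"
    and Ee: "\<And>i j l. cmod (e i j l) \<le> E"
  shows "norm2 N (lap N (\<lambda>i j l. A i j l * e i j l)) \<le> (M + L + 9 * sqrt (M * L)) * (E + norm2 N (lap N e))"
proof -
  have M0: "0 \<le> M" using MA[of 0 0 0] norm_ge_zero order_trans by blast
  have E0: "0 \<le> E" using Ee[of 0 0 0] norm_ge_zero order_trans by blast
  have L0: "0 \<le> L" using LA norm2_nonneg order_trans by blast
  define l where "l = norm2 N (lap N e)"
  have l0: "0 \<le> l" unfolding l_def by (rule norm2_nonneg)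
  define X where "X = 3 * sqrt (M * L) * ((E + l) / 2)"
  have DdA: "Q N (Dd N 1 0 0 A) \<le> Q N (lap N A)" "Q N (Dd N 0 1 0 A) \<le> Q N (lap N A)" "Q N (Dd N 0 0 1 A) \<le> Q N (lap N A)"
    using Dd_le_lap[OF pA N, of "(1,0,0)"] Dd_le_lap[OF pA N, of "(0,1,0)"] Dd_le_lap[OF pA N, of "(0,0,1)"] by simp_all
  have Dde: "Q N (Dd N 1 0 0 e) \<le> Q N (lap N e)" "Q N (Dd N 0 1 0 e) \<le> Q N (lap N e)" "Q N (Dd N 0 0 1 e) \<le> Q N (lap N e)"
    using Dd_le_lap[OF pe N, of "(1,0,0)"] Dd_le_lap[OF pe N, of "(0,1,0)"] Dd_le_lap[OF pe N, of "(0,0,1)"] by simp_all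
  have c1: "norm2 N (\<lambda>i j l. Dp N 1 0 0 A i j l * Dp N 1 0 0 e i j l + Dp N 1 0 0 A (i - 1) j l * Dp N 1 0 0 e (i - 1) j l) \<le> 2 * X"
  proof -
    have "norm2 N (\<lambda>i j l. Dp N 1 0 0 A i j l * Dp N 1 0 0 e i j l + Dp N 1 0 0 A (i - 1) (j - 0) (l - 0) * Dp N 1 0 0 e (i - 1) (j - 0) (l - 0)) \<le> 2 * norm2 N (\<lambda>i j l. Dp N 1 0 0 A i j l * Dp N 1 0 0 e i j l)"
      by (rule norm2_pair[OF per_prodDp[OF pA pe]])
    then show ?thesis using cross_bound[OF N pA pe MA Ee LA DdA(1) Dde(1)]
      unfolding X_def l_def by simp
  qed
  have c2: "norm2 N (\<lambda>i j l. Dp N 0 1 0 A i j l * Dp N 0 1 0 e i j l + Dp N 0 1 0 A i (j - 1) l * Dp N 0 1 0 e i (j - 1) l) \<le> 2 * X"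
  proof -
    have "norm2 N (\<lambda>i j l. Dp N 0 1 0 A i j l * Dp N 0 1 0 e i j l + Dp N 0 1 0 A (i - 0) (j - 1) (l - 0) * Dp N 0 1 0 e (i - 0) (j - 1) (l - 0)) \<le> 2 * norm2 N (\<lambda>i j l. Dp N 0 1 0 A i j l * Dp N 0 1 0 e i j l)"
      by (rule norm2_pair[OF per_prodDp[OF pA pe]])
    then show ?thesis using cross_bound[OF N pA pe MA Ee LA DdA(2) Dde(2)]
      unfolding X_def l_def by simp
  qed
  have c3: "norm2 N (\<lambda>i j l. Dp N 0 0 1 A i j l * Dp N 0 0 1 e i j l + Dp N 0 0 1 A i j (l - 1) * Dp N 0 0 1 e i j (l - 1)) \<le> 2 * X"
  proof -
    have "norm2 N (\<lambda>i j l. Dp N 0 0 1 A i j l * Dp N 0 0 1 e i j l + Dp N 0 0 1 A (i - 0) (j - 0) (l - 1) * Dp N 0 0 1 e (i - 0) (j - 0) (l - 1)) \<le> 2 * norm2 N (\<lambda>i j l. Dp N 0 0 1 A i j l * Dp N 0 0 1 e i j l)"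
      by (rule norm2_pair[OF per_prodDp[OF pA pe]])
    then show ?thesis using cross_bound[OF N pA pe MA Ee LA DdA(3) Dde(3)]
      unfolding X_def l_def by simp
  qed
  have t1: "norm2 N (\<lambda>i j l. A i j l * lap N e i j l) \<le> M * l"
    unfolding l_def by (rule norm2_le) (use MA M0 in \<open>auto simp: norm_mult intro: mult_right_mono\<close>)
  have t2: "norm2 N (\<lambda>i j l. e i j l * lap N A i j l) \<le> E * L"
  proof -
    have "norm2 N (\<lambda>i j l. e i j l * lap N A i j l) \<le> E * norm2 N (lap N A)"
      by (rule norm2_le) (use Ee E0 in \<open>auto simp: norm_mult intro: mult_right_mono\<close>)
    also have "\<dots> \<le> E * L" by (rule mult_left_mono[OF LA E0])
    finally show ?thesis .
  qed
  have "norm2 N (lap N (\<lambda>i j l. A i j l * e i j l)) \<le> M * l + E * L + 2 * X + 2 * X + 2 * X"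
    unfolding lap_product
    by (rule order_trans[OF norm2_add] add_mono c3 order_trans[OF norm2_add] c2 c1 t1 t2)+
  also have "\<dots> \<le> (M + L + 9 * sqrt (M * L)) * (E + l)"
  proof -
    have "M * l \<le> M * (E + l)" using M0 E0 by (simp add: mult_left_mono)
    moreover have "E * L \<le> L * (E + l)" using mult_nonneg_nonneg[OF L0 l0] by (simp add: algebra_simps)
    moreover have "2 * X + 2 * X + 2 * X = 9 * sqrt (M * L) * (E + l)" unfolding X_def by simp
    ultimately show ?thesis by (simp add: algebra_simps)
  qed
  finally show ?thesis unfolding l_def .
qed



lemma lap_add: "lap N (\<lambda>i j l. f i j l + g i j l) = (\<lambda>i j l. lap N f i j l + lap N g i j l)"
  unfolding lap_def by (intro ext) (simp add: algebra_simps)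

lemma lap_cnj: "lap N (\<lambda>i j l. cnj (f i j l)) = (\<lambda>i j l. cnj (lap N f i j l))"
  unfolding lap_def by (intro ext) simp

lemma per_comb1: "per N f \<Longrightarrow> per N (\<lambda>i j l. F (f i j l))"
  unfolding per_pg by (rule pg_comb1)

lemma per_comb2: "per N f \<Longrightarrow> per N g \<Longrightarrow> per N (\<lambda>i j l. F (f i j l) (g i j l))"
  unfolding per_pg by (rule pg_comb2)

lemma NLE_eq: "NLE \<Phi> \<phi> = (\<lambda>i j l. (cnj (\<phi> i j l) * \<phi> i j l + cnj (\<Phi> i j l) * \<Phi> i j l) * (\<Phi> i j l - \<phi> i j l)
                                + (\<phi> i j l * \<Phi> i j l) * cnj (\<Phi> i j l - \<phi> i j l))"
proof (intro ext)
  fix i j l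
  have "complex_of_real ((cmod (\<phi> i j l))\<^sup>2) = cnj (\<phi> i j l) * \<phi> i j l"
    using complex_norm_square[of "\<phi> i j l"] by (simp add: mult.commute)
  then show "NLE \<Phi> \<phi> i j l = (cnj (\<phi> i j l) * \<phi> i j l + cnj (\<Phi> i j l) * \<Phi> i j l) * (\<Phi> i j l - \<phi> i j l)
                                + (\<phi> i j l * \<Phi> i j l) * cnj (\<Phi> i j l - \<phi> i j l)"
    unfolding NLE_def Let_def by (simp add: algebra_simps)
qed

lemma sq_le: "0 \<le> (x::real) \<Longrightarrow> x \<le> c \<Longrightarrow> x * x \<le> c * c"
  by (rule mult_mono) auto

theorem proposition4p2:
  fixes Cs :: real
  assumes "Cs > 0"
  shows "\<exists>C2 C3 :: real. C2 > 0 \<and> C3 > 0 \<and>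
    (\<forall>(N::nat) (\<Phi>::grid) (\<phi>::grid).
       N > 0 \<longrightarrow> per N \<Phi> \<longrightarrow> per N \<phi> \<longrightarrow>
       normi N \<Phi> \<le> Cs \<longrightarrow> norm2 N \<Phi> \<le> Cs \<longrightarrow> norm2 N (lap N \<Phi>) \<le> Cs \<longrightarrow>
       norm2 N \<phi> = 1 \<longrightarrow> normi N \<phi> \<le> Cs + 1/2 \<longrightarrow> norm2 N (lap N \<phi>) \<le> Cs + 1/2 \<longrightarrow>
       norm2 N (NLE \<Phi> \<phi>) \<le> C2 * norm2 N (\<lambda>i j k. \<Phi> i j k - \<phi> i j k) \<and>
       norm2 N (lap N (NLE \<Phi> \<phi>)) \<le> C3 * (norm2 N (\<lambda>i j k. \<Phi> i j k - \<phi> i j k)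
                                       + norm2 N (lap N (\<lambda>i j k. \<Phi> i j k - \<phi> i j k))))"
proof -
  obtain K where K0: "K > 0" and
    K: "\<And>N f i j l. N > 0 \<Longrightarrow> per N f \<Longrightarrow> cmod (f i j l) \<le> K * (norm2 N f + norm2 N (lap N f))"
    using sup_bound by blast
  define c where "c = Cs + 1/2"
  have c0: "0 < c" using assms by (simp add: c_def)
  have cs: "Cs \<le> c" by (simp add: c_def)
  define CC where "CC = (\<lambda>M L::real. M + L + 9 * sqrt (M * L))"
  have CC0: "0 \<le> CC M L" if "0 \<le> M" "0 \<le> L" for M L using that by (simp add: CC_def)
  define LB where "LB = CC c c * (c + c)"
  define LA where "LA = LB + LB"
  define C3 where "C3 = (CC (c * c + c * c) LA + CC (c * c) LB) * (K + 1) + 1"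
  have LB0: "0 \<le> LB" using CC0 c0 by (simp add: LB_def)
  have LA0: "0 \<le> LA" using LB0 by (simp add: LA_def)
  have CCsum0: "0 \<le> CC (c * c + c * c) LA + CC (c * c) LB"
    using CC0[of "c * c + c * c" LA] CC0[of "c * c" LB] LA0 LB0 c0 by simp
  have "0 \<le> (CC (c * c + c * c) LA + CC (c * c) LB) * (K + 1)"
    by (rule mult_nonneg_nonneg[OF CCsum0]) (use K0 in simp)
  then have C30: "0 < C3" unfolding C3_def by linarith
  have main: "norm2 N (NLE \<Phi> \<phi>) \<le> (3 * c^2 + 1) * norm2 N (\<lambda>i j k. \<Phi> i j k - \<phi> i j k) \<and>
       norm2 N (lap N (NLE \<Phi> \<phi>)) \<le> C3 * (norm2 N (\<lambda>i j k. \<Phi> i j k - \<phi> i j k)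
                                       + norm2 N (lap N (\<lambda>i j k. \<Phi> i j k - \<phi> i j k)))"
    if N: "N > 0" and p\<Phi>: "per N \<Phi>" and p\<phi>: "per N \<phi>" and h1: "normi N \<Phi> \<le> Cs"
      and h3: "norm2 N (lap N \<Phi>) \<le> Cs" and h5: "normi N \<phi> \<le> Cs + 1/2"
      and h6: "norm2 N (lap N \<phi>) \<le> Cs + 1/2" for N \<Phi> \<phi>
  proof -
    define e where "e = (\<lambda>i j k. \<Phi> i j k - \<phi> i j k)"
    have b\<Phi>: "cmod (\<Phi> i j l) \<le> c" for i j l using normi_ge_per[OF p\<Phi> N] h1 cs by (meson order_trans)
    have b\<phi>: "cmod (\<phi> i j l) \<le> c" for i j l using normi_ge_per[OF p\<phi> N] h5 unfolding c_def by (meson order_trans)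
    have l\<Phi>: "norm2 N (lap N \<Phi>) \<le> c" using h3 cs by linarith
    have l\<phi>: "norm2 N (lap N \<phi>) \<le> c" using h6 unfolding c_def .
    have pe: "per N e" unfolding e_def using per_comb2[OF p\<Phi> p\<phi>, of "\<lambda>x y. x - y"] by simp
    define n where "n = norm2 N e"
    define ll where "ll = norm2 N (lap N e)"
    have n0: "0 \<le> n" "0 \<le> ll" unfolding n_def ll_def by (simp_all add: norm2_nonneg)
    define Em where "Em = K * (n + ll)"
    have Ee: "cmod (e i j l) \<le> Em" for i j l unfolding Em_def n_def ll_def by (rule K[OF N pe])
    have Ee': "cmod (cnj (e i j l)) \<le> Em" for i j l using Ee by simp
    have NLE': "NLE \<Phi> \<phi> = (\<lambda>i j l. (cnj (\<phi> i j l) * \<phi> i j l + cnj (\<Phi> i j l) * \<Phi> i j l) * e i j l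
                                + (\<phi> i j l * \<Phi> i j l) * cnj (e i j l))"
      unfolding NLE_eq e_def ..
    have part1: "norm2 N (NLE \<Phi> \<phi>) \<le> (3 * c^2 + 1) * n"
    proof -
      have "norm2 N (NLE \<Phi> \<phi>) \<le> (3 * c^2) * norm2 N e"
        unfolding NLE'
      proof (rule norm2_le)
        fix i j l
        let ?x = "cmod (\<phi> i j l)" and ?y = "cmod (\<Phi> i j l)" and ?z = "cmod (e i j l)"
        have xx: "?x * ?x \<le> c * c" "?y * ?y \<le> c * c" "?x * ?y \<le> c * c"
          using sq_le[OF norm_ge_zero b\<phi>] sq_le[OF norm_ge_zero b\<Phi>] mult_mono[OF b\<phi>[of i j l] b\<Phi>[of i j l]] c0 by auto
        have "cmod ((cnj (\<phi> i j l) * \<phi> i j l + cnj (\<Phi> i j l) * \<Phi> i j l) * e i j l + (\<phi> i j l * \<Phi> i j l) * cnj (e i j l))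
              \<le> cmod (cnj (\<phi> i j l) * \<phi> i j l + cnj (\<Phi> i j l) * \<Phi> i j l) * ?z + ?x * ?y * ?z"
          using norm_triangle_ineq[of "(cnj (\<phi> i j l) * \<phi> i j l + cnj (\<Phi> i j l) * \<Phi> i j l) * e i j l" "(\<phi> i j l * \<Phi> i j l) * cnj (e i j l)"]
          by (simp add: norm_mult)
        also have "\<dots> \<le> (?x * ?x + ?y * ?y) * ?z + (c * c) * ?z"
        proof (rule add_mono)
          have "cmod (cnj (\<phi> i j l) * \<phi> i j l + cnj (\<Phi> i j l) * \<Phi> i j l) \<le> ?x * ?x + ?y * ?y"
            using norm_triangle_ineq[of "cnj (\<phi> i j l) * \<phi> i j l" "cnj (\<Phi> i j l) * \<Phi> i j l"] by (simp add: norm_mult)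
          then show "cmod (cnj (\<phi> i j l) * \<phi> i j l + cnj (\<Phi> i j l) * \<Phi> i j l) * ?z \<le> (?x * ?x + ?y * ?y) * ?z"
            by (rule mult_right_mono) simp
          show "?x * ?y * ?z \<le> c * c * ?z" by (rule mult_right_mono[OF xx(3)]) simp
        qed
        also have "\<dots> \<le> (c * c + c * c) * ?z + (c * c) * ?z"
          by (intro add_mono mult_right_mono) (use xx c0 in auto)
        also have "\<dots> = 3 * c^2 * ?z" by (simp add: power2_eq_square algebra_simps)
        finally show "cmod ((cnj (\<phi> i j l) * \<phi> i j l + cnj (\<Phi> i j l) * \<Phi> i j l) * e i j l + (\<phi> i j l * \<Phi> i j l) * cnj (e i j l))
              \<le> 3 * c^2 * cmod (e i j l)" .
      qed simp
      also have "\<dots> \<le> (3 * c^2 + 1) * norm2 N e" by (rule mult_right_mono) (simp_all add: norm2_nonneg)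
      finally show ?thesis unfolding n_def .
    qed
    have pc\<phi>: "per N (\<lambda>i j l. cnj (\<phi> i j l))" by (rule per_comb1[OF p\<phi>])
    have pc\<Phi>: "per N (\<lambda>i j l. cnj (\<Phi> i j l))" by (rule per_comb1[OF p\<Phi>])
    have pce: "per N (\<lambda>i j l. cnj (e i j l))" by (rule per_comb1[OF pe])
    have bc\<phi>: "cmod (cnj (\<phi> i j l)) \<le> c" for i j l using b\<phi> by simp
    have bc\<Phi>: "cmod (cnj (\<Phi> i j l)) \<le> c" for i j l using b\<Phi> by simp
    have lc\<phi>: "norm2 N (lap N (\<lambda>i j l. cnj (\<phi> i j l))) \<le> c" unfolding lap_cnj norm2_cnj by (rule l\<phi>)
    have lc\<Phi>: "norm2 N (lap N (\<lambda>i j l. cnj (\<Phi> i j l))) \<le> c" unfolding lap_cnj norm2_cnj by (rule l\<Phi>)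
    have CCc: "0 \<le> CC c c" using CC0 c0 by simp
    have L1: "norm2 N (lap N (\<lambda>i j l. cnj (\<phi> i j l) * \<phi> i j l)) \<le> LB"
    proof -
      have "norm2 N (lap N (\<lambda>i j l. cnj (\<phi> i j l) * \<phi> i j l)) \<le> CC c c * (c + norm2 N (lap N \<phi>))"
        unfolding CC_def by (rule prod_lap[OF N pc\<phi> p\<phi> bc\<phi> lc\<phi> b\<phi>])
      also have "\<dots> \<le> LB" unfolding LB_def using l\<phi> CCc by (simp add: mult_left_mono)
      finally show ?thesis .
    qed
    have L2: "norm2 N (lap N (\<lambda>i j l. cnj (\<Phi> i j l) * \<Phi> i j l)) \<le> LB"
    proof -
      have "norm2 N (lap N (\<lambda>i j l. cnj (\<Phi> i j l) * \<Phi> i j l)) \<le> CC c c * (c + norm2 N (lap N \<Phi>))"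
        unfolding CC_def by (rule prod_lap[OF N pc\<Phi> p\<Phi> bc\<Phi> lc\<Phi> b\<Phi>])
      also have "\<dots> \<le> LB" unfolding LB_def using l\<Phi> CCc by (simp add: mult_left_mono)
      finally show ?thesis .
    qed
    have L3: "norm2 N (lap N (\<lambda>i j l. \<phi> i j l * \<Phi> i j l)) \<le> LB"
    proof -
      have "norm2 N (lap N (\<lambda>i j l. \<phi> i j l * \<Phi> i j l)) \<le> CC c c * (c + norm2 N (lap N \<Phi>))"
        unfolding CC_def by (rule prod_lap[OF N p\<phi> p\<Phi> b\<phi> l\<phi> b\<Phi>])
      also have "\<dots> \<le> LB" unfolding LB_def using l\<Phi> CCc by (simp add: mult_left_mono)
      finally show ?thesis .
    qed
    define A0 where "A0 = (\<lambda>i j l. cnj (\<phi> i j l) * \<phi> i j l + cnj (\<Phi> i j l) * \<Phi> i j l)"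
    define B0 where "B0 = (\<lambda>i j l. \<phi> i j l * \<Phi> i j l)"
    have pA0: "per N A0" unfolding A0_def
      using per_comb2[OF per_comb2[OF pc\<phi> p\<phi>, of "\<lambda>x y. x * y"] per_comb2[OF pc\<Phi> p\<Phi>, of "\<lambda>x y. x * y"], of "\<lambda>x y. x + y"]
      by simp
    have pB0: "per N B0" unfolding B0_def using per_comb2[OF p\<phi> p\<Phi>, of "\<lambda>x y. x * y"] by simp
    have bA0: "cmod (A0 i j l) \<le> c * c + c * c" for i j l
    proof -
      have "cmod (A0 i j l) \<le> cmod (\<phi> i j l) * cmod (\<phi> i j l) + cmod (\<Phi> i j l) * cmod (\<Phi> i j l)"
        unfolding A0_def using norm_triangle_ineq[of "cnj (\<phi> i j l) * \<phi> i j l" "cnj (\<Phi> i j l) * \<Phi> i j l"]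
        by (simp add: norm_mult)
      also have "\<dots> \<le> c * c + c * c" by (intro add_mono sq_le norm_ge_zero b\<phi> b\<Phi>)
      finally show ?thesis .
    qed
    have bB0: "cmod (B0 i j l) \<le> c * c" for i j l
      unfolding B0_def norm_mult by (rule mult_mono[OF b\<phi> b\<Phi>]) (use c0 in auto)
    have lA0: "norm2 N (lap N A0) \<le> LA"
    proof -
      have "norm2 N (lap N A0) \<le> norm2 N (lap N (\<lambda>i j l. cnj (\<phi> i j l) * \<phi> i j l)) + norm2 N (lap N (\<lambda>i j l. cnj (\<Phi> i j l) * \<Phi> i j l))"
        unfolding A0_def lap_add by (rule norm2_add)
      then show ?thesis unfolding LA_def using L1 L2 by linarith
    qed
    have lB0: "norm2 N (lap N B0) \<le> LB" unfolding B0_def by (rule L3)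
    have T1: "norm2 N (lap N (\<lambda>i j l. A0 i j l * e i j l)) \<le> CC (c * c + c * c) LA * (Em + ll)"
      unfolding CC_def ll_def by (rule prod_lap[OF N pA0 pe bA0 lA0 Ee])
    have T2: "norm2 N (lap N (\<lambda>i j l. B0 i j l * cnj (e i j l))) \<le> CC (c * c) LB * (Em + ll)"
    proof -
      have "norm2 N (lap N (\<lambda>i j l. B0 i j l * cnj (e i j l))) \<le> CC (c * c) LB * (Em + norm2 N (lap N (\<lambda>i j l. cnj (e i j l))))"
        unfolding CC_def by (rule prod_lap[OF N pB0 pce bB0 lB0 Ee'])
      then show ?thesis unfolding lap_cnj norm2_cnj ll_def .
    qed
    have "norm2 N (lap N (NLE \<Phi> \<phi>)) \<le> norm2 N (lap N (\<lambda>i j l. A0 i j l * e i j l)) + norm2 N (lap N (\<lambda>i j l. B0 i j l * cnj (e i j l)))"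
    proof -
      have NLE'': "NLE \<Phi> \<phi> = (\<lambda>i j l. A0 i j l * e i j l + B0 i j l * cnj (e i j l))"
        unfolding NLE' A0_def B0_def ..
      show ?thesis unfolding NLE'' lap_add by (rule norm2_add)
    qed
    also have "\<dots> \<le> (CC (c * c + c * c) LA + CC (c * c) LB) * (Em + ll)"
      using T1 T2 by (simp add: algebra_simps)
    also have "\<dots> \<le> (CC (c * c + c * c) LA + CC (c * c) LB) * ((K + 1) * (n + ll))"
    proof (rule mult_left_mono[OF _ CCsum0])
      show "Em + ll \<le> (K + 1) * (n + ll)" unfolding Em_def using n0 by (simp add: algebra_simps)
    qed
    also have "\<dots> \<le> C3 * (n + ll)"
      unfolding C3_def using n0 by (simp add: algebra_simps)
    finally have part2: "norm2 N (lap N (NLE \<Phi> \<phi>)) \<le> C3 * (n + ll)" .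
    show ?thesis using part1 part2 unfolding n_def ll_def e_def by simp
  qed
  show ?thesis
  proof (rule exI[of _ "3 * c^2 + 1"], rule exI[of _ C3], intro conjI allI impI)
    show "0 < 3 * c^2 + 1" using zero_le_power2[of c] by linarith
    show "0 < C3" by (rule C30)
  next
    fix N \<Phi> \<phi>
    assume "0 < N" "per N \<Phi>" "per N \<phi>" "normi N \<Phi> \<le> Cs" "norm2 N \<Phi> \<le> Cs" "norm2 N (lap N \<Phi>) \<le> Cs"
      "norm2 N \<phi> = 1" "normi N \<phi> \<le> Cs + 1/2" "norm2 N (lap N \<phi>) \<le> Cs + 1/2"
    note m = main[OF this(1,2,3,4,6,8,9)]
    show "norm2 N (NLE \<Phi> \<phi>) \<le> (3 * c^2 + 1) * norm2 N (\<lambda>i j k. \<Phi> i j k - \<phi> i j k)" using m by simp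
    show "norm2 N (lap N (NLE \<Phi> \<phi>)) \<le> C3 * (norm2 N (\<lambda>i j k. \<Phi> i j k - \<phi> i j k)
                                       + norm2 N (lap N (\<lambda>i j k. \<Phi> i j k - \<phi> i j k)))" using m by simp
  qed
qed


end
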